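(* Let $G$ be a directed acyclic graph with $n$ vertices, including special vertices $s$ and $t$, in which each edge $e$ carries a weight function $w_e(x)=a_e x+b_e$ ($a_e,b_e\in\mathbb{R}$). For an $s$-$t$ path $P=(e_1,\dots,e_r)$ let $\mathsf{cost}(P)(x)=w_{e_r}(w_{e_{r-1}}(\cdots w_{e_1}(x)\cdots))$, and let $\mathcal{P}$ be the set of $s$-$t$ paths in $G$. Then $\mathsf{cost}_G(x)=\min_{P\in\mathcal{P}}\mathsf{cost}(P)(x)$ is a piecewise linear function of $x\in\mathbb{R}$ whose number of pieces $p(\mathsf{cost}_G)$ satisfies $p(\mathsf{cost}_G)\le n^{\log n+O(1)}$.
   Context: For a piecewise linear function $f:\mathbb{R}\to\mathbb{R}$, $p(f)$ denotes its number of (maximal linear) pieces. Logarithms are base 2. *)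

theory Defs
  imports "HOL-Analysis.Analysis"
begin

text \<open>A DAG is given by a vertex set V (of naturals) and an edge relation E \<subseteq> V \<times> V,
  acyclic in the library sense. Edge (u,v) carries the weight w(x) = a u v * x + b u v.\<close>

definition st_paths :: "(nat \<times> nat) set \<Rightarrow> nat \<Rightarrow> nat \<Rightarrow> nat list set" where
  "st_paths E s t = {p. p \<noteq> [] \<and> hd p = s \<and> last p = t \<and>
      (\<forall>i. Suc i < length p \<longrightarrow> (p ! i, p ! Suc i) \<in> E)}"

definition path_cost :: "(nat \<Rightarrow> nat \<Rightarrow> real) \<Rightarrow> (nat \<Rightarrow> nat \<Rightarrow> real) \<Rightarrow> nat list \<Rightarrow> real \<Rightarrow> real" where
  "path_cost a b p x = foldl (\<lambda>y (u, v). a u v * y + b u v) x (zip p (tl p))"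

definition cost_G :: "(nat \<Rightarrow> nat \<Rightarrow> real) \<Rightarrow> (nat \<Rightarrow> nat \<Rightarrow> real) \<Rightarrow> (nat \<times> nat) set \<Rightarrow> nat \<Rightarrow> nat \<Rightarrow> real \<Rightarrow> real" where
  "cost_G a b E s t x = Min ((\<lambda>p. path_cost a b p x) ` st_paths E s t)"

definition pl_partition :: "(real \<Rightarrow> real) \<Rightarrow> nat \<Rightarrow> bool" where
  "pl_partition f k \<longleftrightarrow> (\<exists>I :: nat \<Rightarrow> real set.
      (\<Union>i<k. I i) = UNIV \<and>
      (\<forall>i<k. is_interval (I i) \<and> (\<exists>c d. \<forall>x\<in>I i. f x = c * x + d)))"

definition piecewise_linear :: "(real \<Rightarrow> real) \<Rightarrow> bool" where
  "piecewise_linear f \<longleftrightarrow> (\<exists>k. pl_partition f k)"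

text \<open>p(f): number of (maximal linear) pieces = least number of affine interval pieces.\<close>
definition num_pieces :: "(real \<Rightarrow> real) \<Rightarrow> nat" where
  "num_pieces f = (LEAST k. pl_partition f k)"

end

theory Submission
  imports Defs
begin


definition PLB :: "(real \<Rightarrow> real) \<Rightarrow> real set \<Rightarrow> bool" where
  "PLB f B \<longleftrightarrow> finite B \<and> (\<forall>x y. x < y \<and> {x<..<y} \<inter> B = {} \<longrightarrow> (\<exists>c d. \<forall>z\<in>{x..y}. f z = c*z+d))"

definition Aff :: "(real \<Rightarrow> real) \<Rightarrow> (real \<times> real) set" where
  "Aff f = {(c,d). \<exists>p q. p < q \<and> (\<forall>z\<in>{p..q}. f z = c*z+d)}"

lemma affine_eq:
  fixes p q c d c' d' :: real
  assumes "p < q" "\<forall>z\<in>{p..q}. c*z+d = c'*z+d'"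
  shows "c = c' \<and> d = d'"
proof -
  have 1: "c*p+d = c'*p+d'" "c*q+d = c'*q+d'" using assms by auto
  then have "(c - c') * (q - p) = 0" by (simp add: algebra_simps)
  then have "c = c'" using assms(1) by simp
  then show ?thesis using 1 by simp
qed

lemma affine_eq2:
  fixes p q c d c' d' :: real
  assumes "max p p' < min q q'" "\<forall>z\<in>{p..q}. f z = c*z+d" "\<forall>z\<in>{p'..q'}. f z = c'*z+d'"
  shows "c = c' \<and> d = d'"
proof (rule affine_eq[OF assms(1)], rule ballI)
  fix z assume z: "z \<in> {max p p'..min q q'}"
  then have "z \<in> {p..q}" "z \<in> {p'..q'}" by auto
  then show "c*z+d = c'*z+d'" using assms(2,3) by metis
qed

lemma Aff_intro: "p < q \<Longrightarrow> \<forall>z\<in>{p..q}. f z = c*z+d \<Longrightarrow> (c,d) \<in> Aff f"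
  unfolding Aff_def by blast

lemma gap_exists:
  fixes B :: "real set"
  assumes "finite B" "p < q"
  shows "\<exists>p' q'. p \<le> p' \<and> p' < q' \<and> q' \<le> q \<and> {p'<..<q'} \<inter> B = {}"
  using assms
proof (induction B rule: finite_induct)
  case empty
  then show ?case by auto
next
  case (insert b B)
  then obtain p' q' where h: "p \<le> p'" "p' < q'" "q' \<le> q" "{p'<..<q'} \<inter> B = {}" by auto
  show ?case
  proof (cases "b \<in> {p'<..<q'}")
    case True
    have "{p'<..<b} \<inter> insert b B = {}" using h(4) True by (auto simp: disjoint_iff)
    moreover have "p \<le> p' \<and> p' < b \<and> b \<le> q" using h True by auto
    ultimately have "p \<le> p' \<and> p' < b \<and> b \<le> q \<and> {p'<..<b} \<inter> insert b B = {}" by simp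
    then show ?thesis by (rule exI[of _ p', OF exI[of _ b]])
  next
    case False
    have "{p'<..<q'} \<inter> insert b B = {}" using h False by auto
    then have "p \<le> p' \<and> p' < q' \<and> q' \<le> q \<and> {p'<..<q'} \<inter> insert b B = {}" using h by simp
    then show ?thesis by (rule exI[of _ p', OF exI[of _ q']])
  qed
qed

lemma downsets_card:
  fixes B :: "real set"
  assumes "finite B"
  shows "finite {{b\<in>B. b < z} | z. True} \<and> card {{b\<in>B. b < z} | z. True} \<le> card B + 1"
proof -
  let ?D = "{{b\<in>B. b < z} | z. True}"
  have sD: "?D \<subseteq> Pow B" by blast
  have fin: "finite ?D" using finite_subset[OF sD] assms by simp
  have inj: "inj_on card ?D"
  proof (rule inj_onI)
    fix X Y assume XD: "X \<in> ?D" and YD: "Y \<in> ?D" and cXY: "card X = card Y"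
    from XD obtain z1 where X: "X = {b\<in>B. b < z1}" by blast
    from YD obtain z2 where Y: "Y = {b\<in>B. b < z2}" by blast
    have fX: "finite X" "finite Y" using X Y assms by simp_all
    show "X = Y"
    proof (cases "z1 \<le> z2")
      case True
      then have "X \<subseteq> Y" unfolding X Y by auto
      then show ?thesis using card_subset_eq[OF fX(2) _ cXY] by simp
    next
      case False
      then have "Y \<subseteq> X" unfolding X Y by auto
      then show ?thesis using card_subset_eq[OF fX(1) _ cXY[symmetric]] by simp
    qed
  qed
  have sub: "card ` ?D \<subseteq> {0..card B}"
  proof
    fix n assume "n \<in> card ` ?D"
    then obtain z where "n = card {b\<in>B. b < z}" by blast
    moreover have "card {b\<in>B. b < z} \<le> card B" using assms by (intro card_mono) auto
    ultimately show "n \<in> {0..card B}" by simp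
  qed
  have "card (card ` ?D) \<le> card {0..card B}" by (rule card_mono[OF _ sub]) simp
  then have "card (card ` ?D) \<le> card B + 1" by simp
  moreover have "card (card ` ?D) = card ?D" by (rule card_image[OF inj])
  ultimately show ?thesis using fin by simp
qed

lemma Aff_card:
  assumes "PLB f B"
  shows "finite (Aff f) \<and> card (Aff f) \<le> card B + 1"
proof -
  have fB: "finite B" using assms unfolding PLB_def by auto
  have "\<forall>g\<in>Aff f. \<exists>z p' q'. p' < z \<and> z < q' \<and> z \<notin> B \<and> (\<forall>w\<in>{p'..q'}. f w = fst g * w + snd g)"
  proof
    fix g assume "g \<in> Aff f"
    then obtain c d p q where g: "g = (c,d)" "p < q" "\<forall>z\<in>{p..q}. f z = c*z+d"
      unfolding Aff_def by auto
    obtain p' q' where h: "p \<le> p'" "p' < q'" "q' \<le> q" "{p'<..<q'} \<inter> B = {}"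
      using gap_exists[OF fB g(2)] by auto
    show "\<exists>z p' q'. p' < z \<and> z < q' \<and> z \<notin> B \<and> (\<forall>w\<in>{p'..q'}. f w = fst g * w + snd g)"
    proof (rule exI[of _ "(p'+q')/2"], rule exI[of _ p'], rule exI[of _ q'], intro conjI)
      have "(p'+q')/2 \<in> {p'<..<q'}" using h by auto
      then show "(p'+q')/2 \<notin> B" using h(4) by blast
      show "p' < (p'+q')/2" "(p'+q')/2 < q'" using h by auto
      show "\<forall>w\<in>{p'..q'}. f w = fst g * w + snd g"
      proof
        fix w assume "w \<in> {p'..q'}"
        then have "w \<in> {p..q}" using h by auto
        then show "f w = fst g * w + snd g" using g by auto
      qed
    qed
  qed
  from bchoice[OF this] obtain zf where zf: "\<forall>g\<in>Aff f. \<exists>p' q'. p' < zf g \<and> zf g < q' \<and> zf g \<notin> B \<and> (\<forall>w\<in>{p'..q'}. f w = fst g * w + snd g)"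
    by blast
  let ?phi = "\<lambda>g. {b\<in>B. b < zf g}"
  have inj: "inj_on ?phi (Aff f)"
  proof -
    have key: "g1 = g2" if g1: "g1 \<in> Aff f" and g2: "g2 \<in> Aff f" and eq: "?phi g1 = ?phi g2"
      and le: "zf g1 \<le> zf g2" for g1 g2
    proof -
      obtain p1 q1 where 1: "p1 < zf g1" "zf g1 < q1" "zf g1 \<notin> B" "\<forall>w\<in>{p1..q1}. f w = fst g1 * w + snd g1"
        using zf g1 by blast
      obtain p2 q2 where 2: "p2 < zf g2" "zf g2 < q2" "zf g2 \<notin> B" "\<forall>w\<in>{p2..q2}. f w = fst g2 * w + snd g2"
        using zf g2 by blast
      show ?thesis
      proof (cases "zf g1 = zf g2")
        case True
        have "fst g1 = fst g2 \<and> snd g1 = snd g2"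
          apply (rule affine_eq2[of p1 p2 q1 q2 f])
          using 1 2 True by auto
        then show ?thesis by (simp add: prod_eq_iff)
      next
        case False
        then have lt: "zf g1 < zf g2" using le by auto
        have "{zf g1<..<zf g2} \<inter> B = {}"
        proof (rule ccontr)
          assume "{zf g1<..<zf g2} \<inter> B \<noteq> {}"
          then obtain b where "b \<in> B" "zf g1 < b" "b < zf g2" by auto
          then have "b \<in> ?phi g2" "b \<notin> ?phi g1" by auto
          then show False using eq by auto
        qed
        then obtain c d where cd: "\<forall>z\<in>{zf g1..zf g2}. f z = c*z+d"
          using assms lt unfolding PLB_def by blast
        have "fst g1 = c \<and> snd g1 = d"
          apply (rule affine_eq2[of p1 "zf g1" q1 "zf g2" f])
          using 1 cd lt by auto
        moreover have "fst g2 = c \<and> snd g2 = d"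
          apply (rule affine_eq2[of p2 "zf g1" q2 "zf g2" f])
          using 2 cd lt by auto
        ultimately show ?thesis by (simp add: prod_eq_iff)
      qed
    qed
    show ?thesis
    proof (rule inj_onI)
      fix g1 g2 assume "g1 \<in> Aff f" "g2 \<in> Aff f" "?phi g1 = ?phi g2"
      then show "g1 = g2"
        using key[of g1 g2] key[of g2 g1] by (cases "zf g1 \<le> zf g2") auto
    qed
  qed
  have sub: "?phi ` Aff f \<subseteq> {{b\<in>B. b < z} | z. True}" by auto
  have fin: "finite (Aff f)"
    using inj_on_finite[OF inj sub] downsets_card[OF fB] by auto
  have "card (Aff f) = card (?phi ` Aff f)" using card_image[OF inj] by simp
  also have "\<dots> \<le> card {{b\<in>B. b < z} | z. True}"
    using card_mono[OF _ sub] downsets_card[OF fB] by auto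
  also have "\<dots> \<le> card B + 1" using downsets_card[OF fB] by auto
  finally show ?thesis using fin by auto
qed



definition envL :: "(real \<times> real) set \<Rightarrow> real \<Rightarrow> real" where
  "envL S x = Min ((\<lambda>(c,d). c*x+d) ` S)"

lemma envL_le: "finite S \<Longrightarrow> (c,d) \<in> S \<Longrightarrow> envL S x \<le> c*x+d"
  unfolding envL_def by (rule Min_le) force+

lemma envL_in: "finite S \<Longrightarrow> S \<noteq> {} \<Longrightarrow> \<exists>c d. (c,d) \<in> S \<and> envL S x = c*x+d"
proof -
  assume "finite S" "S \<noteq> {}"
  then have "envL S x \<in> (\<lambda>(c,d). c*x+d) ` S" unfolding envL_def by (intro Min_in) auto
  then show ?thesis by auto
qed

lemma envL_ge: "finite S \<Longrightarrow> S \<noteq> {} \<Longrightarrow> (\<forall>c d. (c,d) \<in> S \<longrightarrow> y \<le> c*x+d) \<Longrightarrow> y \<le> envL S x"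
  unfolding envL_def by (subst Min_ge_iff) auto

lemma envL_insert: "finite S \<Longrightarrow> S \<noteq> {} \<Longrightarrow> envL (insert g S) x = min (fst g * x + snd g) (envL S x)"
  unfolding envL_def by (cases g) (simp add: Min_insert)

lemma envL_single: "envL {g} x = fst g * x + snd g"
  unfolding envL_def by (cases g) simp

lemma sign_right:
  fixes c1 d1 c2 d2 x :: real
  shows "\<exists>\<delta>>0. (\<forall>z\<in>{x..x+\<delta>}. c1*z+d1 \<le> c2*z+d2) \<or> (\<forall>z\<in>{x..x+\<delta>}. c2*z+d2 \<le> c1*z+d1)"
proof -
  define v where "v = (c2*x+d2) - (c1*x+d1)"
  define \<alpha> where "\<alpha> = c2 - c1"
  have e: "(c2*z+d2) - (c1*z+d1) = \<alpha>*(z-x) + v" for z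
    unfolding v_def \<alpha>_def by (simp add: algebra_simps)
  define \<delta> where "\<delta> = (if v = 0 then 1 else \<bar>v\<bar> / (\<bar>\<alpha>\<bar> + 1))"
  have dpos: "\<delta> > 0" unfolding \<delta>_def by auto
  have b: "\<bar>\<alpha>*(z-x)\<bar> < \<bar>v\<bar>" if "z \<in> {x..x+\<delta>}" "v \<noteq> 0" for z
  proof -
    have "\<bar>\<alpha>*(z-x)\<bar> = \<bar>\<alpha>\<bar> * (z-x)" using that by (simp add: abs_mult)
    also have "\<dots> \<le> \<bar>\<alpha>\<bar> * \<delta>" using that by (intro mult_left_mono) auto
    also have "\<dots> < (\<bar>\<alpha>\<bar>+1) * \<delta>" using dpos by (simp add: algebra_simps)
    also have "\<dots> = \<bar>v\<bar>" unfolding \<delta>_def using that by simp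
    finally show ?thesis .
  qed
  show ?thesis
  proof (cases "v = 0")
    case True
    show ?thesis
    proof (cases "\<alpha> \<ge> 0")
      case True
      then have "\<forall>z\<in>{x..x+\<delta>}. c1*z+d1 \<le> c2*z+d2"
        using e \<open>v = 0\<close> by (smt (verit, best) atLeastAtMost_iff mult_nonneg_nonneg)
      then show ?thesis using dpos by blast
    next
      case False
      then have "\<forall>z\<in>{x..x+\<delta>}. c2*z+d2 \<le> c1*z+d1"
        using e \<open>v = 0\<close> by (smt (verit, best) atLeastAtMost_iff mult_nonpos_nonneg)
      then show ?thesis using dpos by blast
    qed
  next
    case False
    show ?thesis
    proof (cases "v > 0")
      case True
      then have "\<forall>z\<in>{x..x+\<delta>}. c1*z+d1 \<le> c2*z+d2"
        using e b False by (smt (verit, best))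
      then show ?thesis using dpos by blast
    next
      case f2: False
      then have "\<forall>z\<in>{x..x+\<delta>}. c2*z+d2 \<le> c1*z+d1"
        using e b False by (smt (verit, best))
      then show ?thesis using dpos by blast
    qed
  qed
qed

lemma right_piece:
  assumes "finite S" "S \<noteq> {}"
  shows "\<exists>\<delta>>0. \<exists>c d. (c,d) \<in> S \<and> (\<forall>z\<in>{x..x+\<delta>}. envL S z = c*z+d)"
  using assms
proof (induction S rule: finite_ne_induct)
  case (singleton g)
  then show ?case by (cases g) (auto simp: envL_single intro!: exI[of _ 1])
next
  case (insert g S)
  then obtain \<delta> c d where h: "\<delta> > 0" "(c,d) \<in> S" "\<forall>z\<in>{x..x+\<delta>}. envL S z = c*z+d" by blast
  obtain \<delta>' where h': "\<delta>' > 0" "(\<forall>z\<in>{x..x+\<delta>'}. c*z+d \<le> fst g*z+snd g) \<or> (\<forall>z\<in>{x..x+\<delta>'}. fst g*z+snd g \<le> c*z+d)"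
    using sign_right by blast
  let ?e = "min \<delta> \<delta>'"
  have "?e > 0" using h h' by auto
  from h'(2) show ?case
  proof
    assume a: "\<forall>z\<in>{x..x+\<delta>'}. c*z+d \<le> fst g*z+snd g"
    have "\<forall>z\<in>{x..x+?e}. envL (insert g S) z = c*z+d"
      using a h(3) by (auto simp: envL_insert insert.hyps)
    then show ?thesis using \<open>?e > 0\<close> h(2) by blast
  next
    assume a: "\<forall>z\<in>{x..x+\<delta>'}. fst g*z+snd g \<le> c*z+d"
    have "\<forall>z\<in>{x..x+?e}. envL (insert g S) z = fst g*z+snd g"
      using a h(3) by (auto simp: envL_insert insert.hyps)
    moreover have "(fst g, snd g) \<in> insert g S" by simp
    ultimately show ?thesis using \<open>?e > 0\<close> by blast
  qed
qed

lemma envL_cont: "finite S \<Longrightarrow> S \<noteq> {} \<Longrightarrow> continuous_on UNIV (envL S)"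
proof (induction S rule: finite_ne_induct)
  case (singleton g)
  then show ?case by (simp add: envL_single[abs_def] continuous_intros)
next
  case (insert g S)
  have "envL (insert g S) = (\<lambda>x. min (fst g * x + snd g) (envL S x))"
    by (rule ext) (simp add: envL_insert insert.hyps)
  then show ?case using insert.IH by (auto intro!: continuous_intros)
qed

lemma Aff_envL: assumes "finite S" "S \<noteq> {}" shows "Aff (envL S) \<subseteq> S"
proof
  fix g assume "g \<in> Aff (envL S)"
  then obtain c d p q where g: "g = (c,d)" "p < q" "\<forall>z\<in>{p..q}. envL S z = c*z+d"
    unfolding Aff_def by auto
  obtain \<delta> c' d' where h: "\<delta> > 0" "(c',d') \<in> S" "\<forall>z\<in>{p..p+\<delta>}. envL S z = c'*z+d'"
    using right_piece[OF assms, of p] by blast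
  have "c = c' \<and> d = d'"
    by (rule affine_eq2[of p p q "p+\<delta>" "envL S"]) (use g h in auto)
  then show "g \<in> S" using g h by auto
qed

lemma envL_interval:
  assumes "finite S" "(c,d) \<in> S"
  shows "is_interval {z. envL S z = c*z+d}"
proof -
  have ne: "S \<noteq> {}" using assms by auto
  have eq: "{z. envL S z = c*z+d} = {z. \<forall>c' d'. (c',d') \<in> S \<longrightarrow> c*z+d \<le> c'*z+d'}"
  proof (rule set_eqI, rule iffI)
    fix z assume "z \<in> {z. envL S z = c*z+d}"
    then have e: "envL S z = c*z+d" by simp
    have "c*z+d \<le> c'*z+d'" if "(c',d') \<in> S" for c' d'
      using envL_le[OF assms(1) that, of z] e by simp
    then show "z \<in> {z. \<forall>c' d'. (c',d') \<in> S \<longrightarrow> c*z+d \<le> c'*z+d'}" by blast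
  next
    fix z assume "z \<in> {z. \<forall>c' d'. (c',d') \<in> S \<longrightarrow> c*z+d \<le> c'*z+d'}"
    then have "c*z+d \<le> envL S z" using envL_ge[OF assms(1) ne] by auto
    then show "z \<in> {z. envL S z = c*z+d}" using envL_le[OF assms] by (auto intro: antisym)
  qed
  show ?thesis unfolding eq is_interval_1
  proof (intro ballI allI impI)
    fix a b x
    assume "a \<in> {z. \<forall>c' d'. (c',d') \<in> S \<longrightarrow> c*z+d \<le> c'*z+d'}"
      and "b \<in> {z. \<forall>c' d'. (c',d') \<in> S \<longrightarrow> c*z+d \<le> c'*z+d'}"
      and x: "a \<le> x \<and> x \<le> b"
    then have ha: "\<forall>c' d'. (c', d') \<in> S \<longrightarrow> c * a + d \<le> c' * a + d'"
      and hb: "\<forall>c' d'. (c', d') \<in> S \<longrightarrow> c * b + d \<le> c' * b + d'" by auto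
    have "c * x + d \<le> c' * x + d'" if cd: "(c',d') \<in> S" for c' d'
    proof -
    have "c * a + d \<le> c' * a + d'" using ha cd by blast
    then have 1: "0 \<le> (c'-c)*a + (d'-d)" by (simp add: algebra_simps)
    have "c * b + d \<le> c' * b + d'" using hb cd by blast
    then have 2: "0 \<le> (c'-c)*b + (d'-d)" by (simp add: algebra_simps)
    have "0 \<le> (c'-c)*x + (d'-d)"
    proof (cases "c' - c \<ge> 0")
      case True
      then have "(c'-c)*a \<le> (c'-c)*x" using x by (intro mult_left_mono) auto
      then show ?thesis using 1 by linarith
    next
      case False
      then have "(c'-c)*b \<le> (c'-c)*x" using x by (intro mult_left_mono_neg) auto
      then show ?thesis using 2 by linarith
    qed
    then show "c * x + d \<le> c' * x + d'" by (auto simp: algebra_simps)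
    qed
    then show "x \<in> {z. \<forall>c' d'. (c',d') \<in> S \<longrightarrow> c*z+d \<le> c'*z+d'}" by blast
  qed
qed

lemma envL_partition:
  assumes "finite S" "S \<noteq> {}"
  shows "pl_partition (envL S) (card (Aff (envL S)))"
proof -
  let ?A = "Aff (envL S)"
  have fA: "finite ?A" using Aff_envL[OF assms] assms(1) finite_subset by auto
  obtain h where h: "bij_betw h {0..<card ?A} ?A" using ex_bij_betw_nat_finite[OF fA] by blast
  define I where "I i = {z. envL S z = fst (h i) * z + snd (h i)}" for i
  have "(\<Union>i<card ?A. I i) = UNIV"
  proof (rule set_eqI, rule iffI)
    fix x :: real
    obtain \<delta> c d where r: "\<delta> > 0" "(c,d) \<in> S" "\<forall>z\<in>{x..x+\<delta>}. envL S z = c*z+d"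
      using right_piece[OF assms, of x] by blast
    have "(c,d) \<in> ?A" using r by (intro Aff_intro[of x "x+\<delta>"]) auto
    then obtain i where i: "i < card ?A" "h i = (c,d)" using h unfolding bij_betw_def by force
    have "x \<in> I i" unfolding I_def using i r by auto
    then show "x \<in> (\<Union>i<card ?A. I i)" using i by auto
  qed auto
  moreover have "\<forall>i<card ?A. is_interval (I i) \<and> (\<exists>c d. \<forall>x\<in>I i. envL S x = c * x + d)"
  proof (intro allI impI conjI)
    fix i assume "i < card ?A"
    then have "h i \<in> S" using h Aff_envL[OF assms] unfolding bij_betw_def by auto
    then show "is_interval (I i)" unfolding I_def using envL_interval[OF assms(1), of "fst (h i)" "snd (h i)"] by auto
    show "\<exists>c d. \<forall>x\<in>I i. envL S x = c * x + d" unfolding I_def by auto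
  qed
  ultimately show ?thesis unfolding pl_partition_def by blast
qed



definition nbp :: "(real \<Rightarrow> real) \<Rightarrow> real set" where
  "nbp f = {x. \<not> (\<exists>\<epsilon>>0. \<exists>c d. \<forall>z\<in>{x-\<epsilon>..x+\<epsilon>}. f z = c*z+d)}"

lemma intv_mem: "is_interval (s::real set) \<Longrightarrow> a \<in> s \<Longrightarrow> b \<in> s \<Longrightarrow> a \<le> x \<Longrightarrow> x \<le> b \<Longrightarrow> x \<in> s"
  unfolding is_interval_1 by blast

lemma envL_PLB:
  assumes "finite S" "S \<noteq> {}"
  shows "PLB (envL S) (nbp (envL S)) \<and> card (nbp (envL S)) \<le> card (Aff (envL S))"
proof -
  let ?F = "envL S"
  let ?A = "Aff ?F"
  have fA: "finite ?A" using Aff_envL[OF assms] assms(1) finite_subset by auto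
  have "\<forall>x. \<exists>g. \<exists>\<delta>>0. g \<in> S \<and> (\<forall>z\<in>{x..x+\<delta>}. ?F z = fst g*z+snd g)"
    using right_piece[OF assms] by fastforce
  then obtain rp where rp: "\<And>x. \<exists>\<delta>>0. rp x \<in> S \<and> (\<forall>z\<in>{x..x+\<delta>}. ?F z = fst (rp x)*z+snd (rp x))"
    by metis
  have rpA: "rp x \<in> ?A" for x
  proof -
    obtain \<delta> where "\<delta> > 0" "\<forall>z\<in>{x..x+\<delta>}. ?F z = fst (rp x)*z+snd (rp x)" using rp by blast
    then show ?thesis using Aff_intro[of x "x+\<delta>" ?F "fst (rp x)" "snd (rp x)"] by simp
  qed
  have inj: "inj_on rp (nbp ?F)"
  proof -
    have key: False if x: "x \<in> nbp ?F" and x': "x' \<in> nbp ?F" and lt: "x < x'" and eq: "rp x = rp x'" for x x'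
    proof -
      obtain c d where g: "rp x = (c,d)" by (cases "rp x")
      obtain \<delta> where d: "\<delta> > 0" "\<forall>z\<in>{x..x+\<delta>}. ?F z = c*z+d" using rp[of x] g by auto
      obtain \<delta>' where d': "\<delta>' > 0" "\<forall>z\<in>{x'..x'+\<delta>'}. ?F z = c*z+d" using rp[of x'] g eq by auto
      have inS: "(c,d) \<in> S" using rp[of x] g by auto
      have iv: "is_interval {z. ?F z = c*z+d}" by (rule envL_interval[OF assms(1) inS])
      have xJ: "x \<in> {z. ?F z = c*z+d}" using d by auto
      have yJ: "x'+\<delta>' \<in> {z. ?F z = c*z+d}" using d' by auto
      have "?F z = c*z+d" if "z \<in> {x..x'+\<delta>'}" for z
        using intv_mem[OF iv xJ yJ, of z] that by auto
      then have "\<forall>z\<in>{x'-min (x'-x) \<delta>'..x'+min (x'-x) \<delta>'}. ?F z = c*z+d"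
      proof (intro ballI)
        fix z assume H: "\<And>z. z \<in> {x..x'+\<delta>'} \<Longrightarrow> ?F z = c*z+d" and z: "z \<in> {x'-min (x'-x) \<delta>'..x'+min (x'-x) \<delta>'}"
        have "z \<in> {x..x'+\<delta>'}" using z by (auto simp: min_def split: if_splits)
        then show "?F z = c*z+d" by (rule H)
      qed
      moreover have "min (x'-x) \<delta>' > 0" using lt d' by auto
      ultimately show False using x' unfolding nbp_def by blast
    qed
    show ?thesis by (rule inj_onI) (metis key linorder_neqE_linordered_idom)
  qed
  have sub: "rp ` nbp ?F \<subseteq> ?A" using rpA by auto
  have fin: "finite (nbp ?F)" using inj_on_finite[OF inj sub fA] .
  have card: "card (nbp ?F) \<le> card ?A"
    using card_inj_on_le[OF inj sub fA] .
  have cont: "continuous_on UNIV ?F" by (rule envL_cont[OF assms])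
  have "\<exists>c d. \<forall>z\<in>{x..y}. ?F z = c*z+d" if xy: "x < y" and gap: "{x<..<y} \<inter> nbp ?F = {}" for x y
  proof -
    obtain c d where g: "rp x = (c,d)" by (cases "rp x")
    obtain \<delta> where d: "\<delta> > 0" "\<forall>z\<in>{x..x+\<delta>}. ?F z = c*z+d" using rp[of x] g by auto
    have inS: "(c,d) \<in> S" using rp[of x] g by auto
    let ?J = "{z. ?F z = c*z+d}"
    have iv: "is_interval ?J" by (rule envL_interval[OF assms(1) inS])
    have cl: "closed ?J" by (rule closed_Collect_eq[OF cont]) (auto intro!: continuous_intros)
    have cpt: "compact (?J \<inter> {x..y})" using closed_Int_compact[OF cl compact_Icc[of x y]] .
    have xJ: "x \<in> ?J \<inter> {x..y}" using d xy by auto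
    obtain m where m: "m \<in> ?J \<inter> {x..y}" "\<forall>z\<in>?J \<inter> {x..y}. z \<le> m"
      using compact_attains_sup[OF cpt] xJ by blast
    have x1: "x + min \<delta> (y-x) \<in> ?J \<inter> {x..y}" using d xy by auto
    then have "x + min \<delta> (y-x) \<le> m" using m(2) by blast
    then have mx: "m > x" using d xy by linarith
    have "m = y"
    proof (rule ccontr)
      assume "m \<noteq> y"
      then have my: "m < y" using m by auto
      then have "m \<notin> nbp ?F" using gap mx by auto
      then obtain \<epsilon> c' d' where e: "\<epsilon> > 0" "\<forall>z\<in>{m-\<epsilon>..m+\<epsilon>}. ?F z = c'*z+d'"
        unfolding nbp_def by blast
      have inJ: "z \<in> ?J" if "z \<in> {x..m}" for z
        using intv_mem[OF iv, of x m z] xJ m that by auto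
      have inJ': "\<forall>z\<in>{x..m}. ?F z = c*z+d" using inJ by auto
      have "max (m-\<epsilon>) x < min (m+\<epsilon>) m" using e mx by auto
      then have "c' = c \<and> d' = d"
        by (rule affine_eq2[OF _ e(2) inJ'])
      then have "m + min \<epsilon> (y-m) \<in> ?J \<inter> {x..y}" using e my mx by auto
      then have "m + min \<epsilon> (y-m) \<le> m" using m(2) by blast
      then show False using e my by linarith
    qed
    then have "\<forall>z\<in>{x..y}. ?F z = c*z+d"
      using intv_mem[OF iv, of x y] xJ m by auto
    then show ?thesis by blast
  qed
  then show ?thesis using fin card unfolding PLB_def by blast
qed

definition conc :: "(real \<Rightarrow> real) \<Rightarrow> bool" where
  "conc f \<longleftrightarrow> (\<forall>x y l. 0 \<le> l \<and> l \<le> 1 \<longrightarrow> (1-l) * f x + l * f y \<le> f ((1-l)*x + l*y))"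

lemma envL_conc: assumes "finite S" "S \<noteq> {}" shows "conc (envL S)"
  unfolding conc_def
proof (intro allI impI)
  fix x y l :: real assume l: "0 \<le> l \<and> l \<le> 1"
  show "(1-l) * envL S x + l * envL S y \<le> envL S ((1-l)*x + l*y)"
  proof (rule envL_ge[OF assms], intro allI impI)
    fix c d assume cd: "(c,d) \<in> S"
    have "(1-l) * envL S x \<le> (1-l) * (c*x+d)" using l envL_le[OF assms(1) cd] by (intro mult_left_mono) auto
    moreover have "l * envL S y \<le> l * (c*y+d)" using l envL_le[OF assms(1) cd] by (intro mult_left_mono) auto
    ultimately show "(1-l) * envL S x + l * envL S y \<le> c * ((1-l)*x + l*y) + d"
      by (simp add: algebra_simps)
  qed
qed

lemma conc_reflect: "conc f \<Longrightarrow> conc (\<lambda>x. f (-x))"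
  unfolding conc_def
proof (intro allI impI)
  fix x y l :: real
  assume "\<forall>x y l. 0 \<le> l \<and> l \<le> 1 \<longrightarrow> (1-l) * f x + l * f y \<le> f ((1-l)*x + l*y)" "0 \<le> l \<and> l \<le> 1"
  then have "(1-l) * f (-x) + l * f (-y) \<le> f ((1-l)*(-x) + l*(-y))" by blast
  then show "(1-l) * f (-x) + l * f (-y) \<le> f (-((1-l)*x + l*y))" by (simp add: algebra_simps)
qed

definition lc :: "(real \<Rightarrow> real) \<Rightarrow> real \<Rightarrow> bool" where
  "lc f x \<longleftrightarrow> (\<exists>\<epsilon>>0. \<forall>z. \<bar>z - x\<bar> < \<epsilon> \<longrightarrow> f z = f x)"

definition lev2 :: "(real \<Rightarrow> real) \<Rightarrow> bool" where
  "lev2 f \<longleftrightarrow> (\<forall>v. finite {x. f x = v \<and> \<not> lc f x} \<and> card {x. f x = v \<and> \<not> lc f x} \<le> 2)"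

lemma no_three:
  fixes A :: "real set"
  assumes "\<And>x1 x2 x3. x1 \<in> A \<Longrightarrow> x2 \<in> A \<Longrightarrow> x3 \<in> A \<Longrightarrow> x1 < x2 \<Longrightarrow> x2 < x3 \<Longrightarrow> False"
  shows "finite A \<and> card A \<le> 2"
proof (rule ccontr)
  assume "\<not> (finite A \<and> card A \<le> 2)"
  then have "\<exists>T. T \<subseteq> A \<and> card T = 3 \<and> finite T"
  proof (cases "finite A")
    case True
    then show ?thesis using \<open>\<not> (finite A \<and> card A \<le> 2)\<close> obtain_subset_with_card_n[of 3 A]
      by (metis not_less_eq_eq numeral_2_eq_2 numeral_3_eq_3)
  next
    case False
    then show ?thesis using infinite_arbitrarily_large by blast
  qed
  then obtain T where T: "T \<subseteq> A" "card T = 3" by blast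
  then obtain a b c where abc: "T = {a,b,c}" "a \<noteq> b" "b \<noteq> c" "a \<noteq> c" by (auto simp: card_3_iff)
  then have in3: "a \<in> A" "b \<in> A" "c \<in> A" using T by auto
  show False
    using assms[OF in3(1) in3(2) in3(3)] assms[OF in3(1) in3(3) in3(2)] assms[OF in3(2) in3(1) in3(3)]
      assms[OF in3(2) in3(3) in3(1)] assms[OF in3(3) in3(1) in3(2)] assms[OF in3(3) in3(2) in3(1)] abc
    by argo
qed

lemma conc_lev2: assumes "conc f" shows "lev2 f"
  unfolding lev2_def
proof
  fix v
  show "finite {x. f x = v \<and> \<not> lc f x} \<and> card {x. f x = v \<and> \<not> lc f x} \<le> 2"
  proof (rule no_three)
    fix x1 x2 x3 assume a: "x1 \<in> {x. f x = v \<and> \<not> lc f x}" "x2 \<in> {x. f x = v \<and> \<not> lc f x}"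
      "x3 \<in> {x. f x = v \<and> \<not> lc f x}" "x1 < x2" "x2 < x3"
    have cv: "(1-l) * f x + l * f y \<le> f ((1-l)*x + l*y)" if "0 \<le> l" "l \<le> 1" for x y l
      using assms that unfolding conc_def by blast
    have ge: "f z \<ge> v" if "x1 \<le> z" "z \<le> x3" for z
    proof -
      define l where "l = (z - x1) / (x3 - x1)"
      have l: "0 \<le> l" "l \<le> 1" unfolding l_def using that a by (auto simp: field_simps)
      have "l*(x3-x1) = z - x1" unfolding l_def using a by simp
      moreover have "(1-l)*x1 + l*x3 = x1 + l*(x3-x1)" by (simp add: algebra_simps)
      ultimately have "(1-l)*x1 + l*x3 = z" by simp
      then show ?thesis using cv[OF l, of x1 x3] a by (simp add: algebra_simps)
    qed
    have le: "f z \<le> v" if "x1 < z" "z < x3" for z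
    proof (cases "z \<le> x2")
      case True
      define l where "l = (x2 - z) / (x3 - z)"
      have l: "0 \<le> l" "l < 1" unfolding l_def using that a True by (auto simp: field_simps)
      have "l*(x3-z) = x2 - z" unfolding l_def using a that by simp
      moreover have "(1-l)*z + l*x3 = z + l*(x3-z)" by (simp add: algebra_simps)
      ultimately have "(1-l)*z + l*x3 = x2" by simp
      then have "(1-l) * f z + l * v \<le> v" using cv[of l z x3] l a by auto
      then have "(1-l) * (f z - v) \<le> 0" by (simp add: algebra_simps)
      then show ?thesis using l by (simp add: mult_le_0_iff)
    next
      case False
      define l where "l = (z - x2) / (z - x1)"
      have l: "0 \<le> l" "l < 1" unfolding l_def using that a False by (auto simp: field_simps)
      have "l*(z-x1) = z - x2" unfolding l_def using a that by simp
      moreover have "(1-l)*z + l*x1 = z - l*(z-x1)" by (simp add: algebra_simps)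
      ultimately have "(1-l)*z + l*x1 = x2" by simp
      then have "(1-l) * f z + l * v \<le> v" using cv[of l z x1] l a by auto
      then have "(1-l) * (f z - v) \<le> 0" by (simp add: algebra_simps)
      then show ?thesis using l by (simp add: mult_le_0_iff)
    qed
    have "lc f x2" unfolding lc_def
    proof (intro exI[of _ "min (x2-x1) (x3-x2)"] conjI allI impI)
      show "min (x2-x1) (x3-x2) > 0" using a by auto
      fix z assume "\<bar>z - x2\<bar> < min (x2-x1) (x3-x2)"
      then have "x1 < z" "z < x3" by auto
      then have "v \<le> f z" "f z \<le> v" using ge[of z] le[of z] by auto
      moreover have "f x2 = v" using a by auto
      ultimately show "f z = f x2" by linarith
    qed
    then show False using a by auto
  qed
qed

lemma lc_affine: "a \<noteq> 0 \<Longrightarrow> lc (\<lambda>z. a * f z + b) x \<longleftrightarrow> lc f x"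
  unfolding lc_def by simp

lemma lev2_affine: assumes "lev2 f" shows "lev2 (\<lambda>z. a * f z + b)"
proof (cases "a = 0")
  case True
  have "lc (\<lambda>z. a * f z + b) x" for x unfolding lc_def by (rule exI[of _ 1]) (simp add: True)
  then show ?thesis unfolding lev2_def by simp
next
  case False
  show ?thesis unfolding lev2_def
  proof
    fix v
    have "{x. a * f x + b = v \<and> \<not> lc (\<lambda>z. a * f z + b) x} = {x. a * f x + b = v \<and> \<not> lc f x}"
      by (simp only: lc_affine[OF False])
    also have "\<dots> = {x. f x = (v - b)/a \<and> \<not> lc f x}"
      using False by (auto simp: field_simps)
    finally have "{x. a * f x + b = v \<and> \<not> lc (\<lambda>z. a * f z + b) x} = {x. f x = (v - b)/a \<and> \<not> lc f x}" .
    then show "finite {x. a * f x + b = v \<and> \<not> lc (\<lambda>z. a * f z + b) x} \<and> card {x. a * f x + b = v \<and> \<not> lc (\<lambda>z. a * f z + b) x} \<le> 2"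
      using assms unfolding lev2_def by simp
  qed
qed



lemma PLB_comp:
  assumes G: "PLB G BG" and h: "PLB h Bh" and l2: "lev2 h"
  shows "PLB (\<lambda>x. G (h x)) (Bh \<union> (\<Union>b\<in>BG. {x. h x = b \<and> \<not> lc h x}))
       \<and> card (Bh \<union> (\<Union>b\<in>BG. {x. h x = b \<and> \<not> lc h x})) \<le> card Bh + 2 * card BG"
proof -
  let ?E = "\<Union>b\<in>BG. {x. h x = b \<and> \<not> lc h x}"
  have fBG: "finite BG" using G unfolding PLB_def by auto
  have fBh: "finite Bh" using h unfolding PLB_def by auto
  have fE: "finite ?E" using fBG l2 unfolding lev2_def by auto
  have "card ?E \<le> (\<Sum>b\<in>BG. card {x. h x = b \<and> \<not> lc h x})" by (rule card_UN_le[OF fBG])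
  also have "\<dots> \<le> (\<Sum>b\<in>BG. 2)" using l2 unfolding lev2_def by (intro sum_mono) auto
  also have "\<dots> = 2 * card BG" by simp
  finally have cE: "card ?E \<le> 2 * card BG" .
  have card: "card (Bh \<union> ?E) \<le> card Bh + 2 * card BG"
    using card_Un_le[of Bh ?E] cE by linarith
  have "\<exists>c d. \<forall>z\<in>{x..y}. G (h z) = c*z+d" if xy: "x < y" and gap: "{x<..<y} \<inter> (Bh \<union> ?E) = {}" for x y
  proof -
    have "{x<..<y} \<inter> Bh = {}" using gap by auto
    then obtain \<alpha> \<beta> where hab: "\<forall>z\<in>{x..y}. h z = \<alpha>*z+\<beta>" using h xy unfolding PLB_def by blast
    show ?thesis
    proof (cases "\<alpha> = 0")
      case True
      then have "\<forall>z\<in>{x..y}. G (h z) = 0*z + G \<beta>" using hab by auto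
      then show ?thesis by blast
    next
      case False
      have nlc: "\<not> lc h z" if z: "z \<in> {x<..<y}" for z
      proof
        assume "lc h z"
        then obtain \<epsilon> where e: "\<epsilon> > 0" "\<forall>w. \<bar>w - z\<bar> < \<epsilon> \<longrightarrow> h w = h z" unfolding lc_def by blast
        define \<mu> where "\<mu> = min \<epsilon> (y - z)"
        define w where "w = z + \<mu> / 2"
        have m1: "\<mu> > 0" "\<mu> \<le> \<epsilon>" "\<mu> \<le> y - z" unfolding \<mu>_def using e z by auto
        have wz: "w - z = \<mu>/2" unfolding w_def by simp
        have w1: "\<bar>w - z\<bar> < \<epsilon>" unfolding wz using m1 by simp
        have w2: "w \<in> {x..y}" using wz m1 z by simp
        have w3: "w - z \<noteq> 0" using wz m1 by simp
        have "h w = h z" using e(2) w1 by blast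
        moreover have "h w = \<alpha>*w+\<beta>" using hab w2 by blast
        moreover have "h z = \<alpha>*z+\<beta>" using hab z by simp
        ultimately have "\<alpha>*w - \<alpha>*z = 0" by linarith
        then have "\<alpha> * (w - z) = 0" by (simp add: right_diff_distrib)
        then show False using False w3 by simp
      qed
      have notB: "h z \<notin> BG" if z: "z \<in> {x<..<y}" for z
      proof
        assume "h z \<in> BG"
        then have "z \<in> ?E" using nlc[OF z] by auto
        then show False using gap z by auto
      qed
      have hx: "h x = \<alpha>*x+\<beta>" and hy: "h y = \<alpha>*y+\<beta>" using hab xy by auto
      have inv: "\<exists>z\<in>{x<..<y}. h z = u" if u: "\<alpha>*x+\<beta> < u \<and> u < \<alpha>*y+\<beta> \<or> \<alpha>*y+\<beta> < u \<and> u < \<alpha>*x+\<beta>" for u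
      proof -
        define z where "z = (u - \<beta>)/\<alpha>"
        have hz: "\<alpha>*z+\<beta> = u" unfolding z_def using False by simp
        have "x < z \<and> z < y"
        proof (cases "\<alpha> > 0")
          case True
          have "\<alpha>*x < \<alpha>*y" using mult_strict_left_mono[OF xy True] .
          then have "\<alpha>*x+\<beta> < u \<and> u < \<alpha>*y+\<beta>" using u by linarith
          then have "\<alpha>*x < \<alpha>*z" "\<alpha>*z < \<alpha>*y" using hz by linarith+
          then show ?thesis using True by (simp add: mult_less_cancel_left_pos)
        next
          case f2: False
          then have neg: "\<alpha> < 0" using False by linarith
          have "\<alpha>*y < \<alpha>*x" using mult_strict_left_mono_neg[OF xy neg] .
          then have "\<alpha>*y+\<beta> < u \<and> u < \<alpha>*x+\<beta>" using u by linarith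
          then have "\<alpha>*z < \<alpha>*x" "\<alpha>*y < \<alpha>*z" using hz by linarith+
          then show ?thesis using neg by (simp add: mult_less_cancel_left_neg)
        qed
        moreover then have "h z = u" using hab hz by auto
        ultimately show ?thesis by auto
      qed
      define lo where "lo = min (h x) (h y)"
      define hi where "hi = max (h x) (h y)"
      have "h x \<noteq> h y"
      proof
        assume "h x = h y"
        then have "\<alpha>*y - \<alpha>*x = 0" using hx hy by linarith
        then have "\<alpha> * (y - x) = 0" by (simp add: right_diff_distrib)
        then show False using False xy by simp
      qed
      then have lohi: "lo < hi" unfolding lo_def hi_def by auto
      have gapG: "{lo<..<hi} \<inter> BG = {}"
      proof (rule ccontr)
        assume "{lo<..<hi} \<inter> BG \<noteq> {}"
        then obtain u where u: "u \<in> BG" "lo < u" "u < hi" by auto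
        then have "\<alpha>*x+\<beta> < u \<and> u < \<alpha>*y+\<beta> \<or> \<alpha>*y+\<beta> < u \<and> u < \<alpha>*x+\<beta>"
          unfolding lo_def hi_def hx[symmetric] hy[symmetric] by linarith
        then obtain z where "z \<in> {x<..<y}" "h z = u" using inv by blast
        then show False using notB u by blast
      qed
      have range: "\<forall>z\<in>{x..y}. h z \<in> {lo..hi}"
      proof
        fix z assume z: "z \<in> {x..y}"
        then have hz: "h z = \<alpha>*z+\<beta>" using hab by auto
        have "\<alpha>*x \<le> \<alpha>*z \<and> \<alpha>*z \<le> \<alpha>*y \<or> \<alpha>*y \<le> \<alpha>*z \<and> \<alpha>*z \<le> \<alpha>*x"
        proof (cases "\<alpha> \<ge> 0")
          case True
          then show ?thesis using z mult_left_mono[of x z \<alpha>] mult_left_mono[of z y \<alpha>] by auto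
        next
          case f2: False
          then show ?thesis using z mult_left_mono_neg[of x z \<alpha>] mult_left_mono_neg[of z y \<alpha>] by auto
        qed
        then show "h z \<in> {lo..hi}" unfolding lo_def hi_def hx hy hz by auto
      qed
      have "\<exists>lo hi. lo < hi \<and> {lo<..<hi} \<inter> BG = {} \<and> (\<forall>z\<in>{x..y}. h z \<in> {lo..hi})"
        using lohi gapG range by blast
      then obtain lo hi where lh: "lo < hi" "{lo<..<hi} \<inter> BG = {}" "\<forall>z\<in>{x..y}. h z \<in> {lo..hi}" by blast
      then obtain \<gamma> \<delta> where gd: "\<forall>u\<in>{lo..hi}. G u = \<gamma>*u+\<delta>" using G unfolding PLB_def by blast
      have "\<forall>z\<in>{x..y}. G (h z) = (\<gamma>*\<alpha>)*z + (\<gamma>*\<beta>+\<delta>)"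
      proof
        fix z assume z: "z \<in> {x..y}"
        then have "G (h z) = \<gamma> * h z + \<delta>" using gd lh by auto
        also have "\<dots> = (\<gamma>*\<alpha>)*z + (\<gamma>*\<beta>+\<delta>)" using hab z by (simp add: algebra_simps)
        finally show "G (h z) = (\<gamma>*\<alpha>)*z + (\<gamma>*\<beta>+\<delta>)" .
      qed
      then show ?thesis by blast
    qed
  qed
  then show ?thesis using card fBh fE unfolding PLB_def by blast
qed

lemma PLB_affine: "PLB f B \<Longrightarrow> PLB (\<lambda>x. a * f x + b) B"
  unfolding PLB_def
proof (intro conjI allI impI)
  fix x y assume H: "finite B \<and> (\<forall>x y. x < y \<and> {x<..<y} \<inter> B = {} \<longrightarrow> (\<exists>c d. \<forall>z\<in>{x..y}. f z = c * z + d))"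
    and xy: "x < y \<and> {x<..<y} \<inter> B = {}"
  then obtain c d where "\<forall>z\<in>{x..y}. f z = c * z + d" by blast
  then have "\<forall>z\<in>{x..y}. a * f z + b = (a*c) * z + (a*d+b)" by (simp add: algebra_simps)
  then show "\<exists>c d. \<forall>z\<in>{x..y}. a * f z + b = c * z + d" by blast
qed (auto simp: PLB_def)

lemma PLB_reflect:
  assumes "PLB f B" shows "PLB (\<lambda>x. - f (- x)) (uminus ` B)"
  unfolding PLB_def
proof (intro conjI allI impI)
  show "finite (uminus ` B)" using assms unfolding PLB_def by auto
  fix x y assume xy: "x < y \<and> {x<..<y} \<inter> uminus ` B = {}"
  have "{-y<..<-x} \<inter> B = {}"
  proof (rule ccontr)
    assume "{-y<..<-x} \<inter> B \<noteq> {}"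
    then obtain b where "b \<in> B" "-y < b" "b < -x" by auto
    then have "-b \<in> {x<..<y} \<inter> uminus ` B" by auto
    then show False using xy by auto
  qed
  moreover have "-y < -x" using xy by auto
  ultimately obtain c d where cd: "\<forall>z\<in>{-y..-x}. f z = c * z + d" using assms unfolding PLB_def by blast
  have "\<forall>z\<in>{x..y}. - f (- z) = c * z + (-d)"
  proof
    fix z assume "z \<in> {x..y}"
    then have "-z \<in> {-y..-x}" by auto
    then show "- f (- z) = c * z + (-d)" using cd by auto
  qed
  then show "\<exists>c d. \<forall>z\<in>{x..y}. - f (- z) = c * z + d" by blast
qed

lemma Aff_Min:
  assumes fJ: "finite J" and neJ: "J \<noteq> {}" and P: "\<forall>j\<in>J. PLB (H j) (Bs j)"
  shows "Aff (\<lambda>x. Min ((\<lambda>j. H j x) ` J)) \<subseteq> (\<Union>j\<in>J. Aff (H j))"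
proof
  let ?F = "\<lambda>x. Min ((\<lambda>j. H j x) ` J)"
  fix g assume "g \<in> Aff ?F"
  then obtain c d p q where g: "g = (c,d)" "p < q" "\<forall>z\<in>{p..q}. ?F z = c*z+d"
    unfolding Aff_def by auto
  have fB: "finite (\<Union>j\<in>J. Bs j)" using fJ P unfolding PLB_def by auto
  obtain p' q' where pq: "p \<le> p'" "p' < q'" "q' \<le> q" "{p'<..<q'} \<inter> (\<Union>j\<in>J. Bs j) = {}"
    using gap_exists[OF fB g(2)] by blast
  have "\<forall>j\<in>J. \<exists>cd. \<forall>z\<in>{p'..q'}. H j z = fst cd * z + snd cd"
  proof
    fix j assume j: "j \<in> J"
    then have "{p'<..<q'} \<inter> Bs j = {}" using pq by auto
    then obtain c d where "\<forall>z\<in>{p'..q'}. H j z = c * z + d" using P j pq unfolding PLB_def by blast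
    then show "\<exists>cd. \<forall>z\<in>{p'..q'}. H j z = fst cd * z + snd cd" by (intro exI[of _ "(c,d)"]) simp
  qed
  from bchoice[OF this] obtain cf where cf: "\<forall>j\<in>J. \<forall>z\<in>{p'..q'}. H j z = fst (cf j) * z + snd (cf j)"
    by blast
  let ?S = "cf ` J"
  have fS: "finite ?S" "?S \<noteq> {}" using fJ neJ by auto
  have Feq: "?F z = envL ?S z" if z: "z \<in> {p'..q'}" for z
  proof -
    have "(\<lambda>(c,d). c*z+d) ` ?S = (\<lambda>j. H j z) ` J"
      unfolding image_image using cf z by (auto simp: case_prod_beta intro!: image_cong)
    then show ?thesis unfolding envL_def by simp
  qed
  obtain \<delta> c' d' where r: "\<delta> > 0" "(c',d') \<in> ?S" "\<forall>z\<in>{p'..p'+\<delta>}. envL ?S z = c'*z+d'"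
    using right_piece[OF fS, of p'] by blast
  obtain j0 where j0: "j0 \<in> J" "cf j0 = (c',d')" using r(2) by auto
  let ?q = "min q' (p'+\<delta>)"
  have F2: "\<forall>z\<in>{p'..?q}. ?F z = c'*z+d'"
  proof
    fix z assume "z \<in> {p'..?q}"
    then show "?F z = c'*z+d'" using Feq[of z] r(3) by auto
  qed
  have F1: "\<forall>z\<in>{p'..q'}. ?F z = c*z+d" using g(3) pq by auto
  have "max p' p' < min q' ?q" using pq r by auto
  then have "c = c' \<and> d = d'" by (rule affine_eq2[OF _ F1 F2])
  moreover have "\<forall>z\<in>{p'..?q}. H j0 z = c'*z+d'" using cf j0 by auto
  moreover have "p' < ?q" using pq r by auto
  ultimately have "(c,d) \<in> Aff (H j0)" using Aff_intro[of p' ?q "H j0" c' d'] by auto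
  then show "g \<in> (\<Union>j\<in>J. Aff (H j))" using g j0 by auto
qed



definition pstep :: "(nat \<Rightarrow> nat \<Rightarrow> real) \<Rightarrow> (nat \<Rightarrow> nat \<Rightarrow> real) \<Rightarrow> real \<times> real \<Rightarrow> nat \<times> nat \<Rightarrow> real \<times> real" where
  "pstep a b = (\<lambda>(al,be) (u,v). (a u v * al, a u v * be + b u v))"

definition pcoef :: "(nat \<Rightarrow> nat \<Rightarrow> real) \<Rightarrow> (nat \<Rightarrow> nat \<Rightarrow> real) \<Rightarrow> nat list \<Rightarrow> real \<times> real" where
  "pcoef a b p = foldl (pstep a b) (1,0) (zip p (tl p))"

lemma foldl_aff:
  fixes a b :: "nat \<Rightarrow> nat \<Rightarrow> real" and al be x :: real
  shows "foldl (\<lambda>y (u, v). a u v * y + b u v) (al*x+be) L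
     = fst (foldl (pstep a b) (al,be) L) * x + snd (foldl (pstep a b) (al,be) L)"
proof (induction L arbitrary: al be)
  case Nil
  then show ?case by simp
next
  case (Cons e L)
  obtain u v where e: "e = (u,v)" by (cases e)
  have eq: "a u v * (al * x + be) + b u v = (a u v * al) * x + (a u v * be + b u v)" by (simp add: algebra_simps)
  have "foldl (\<lambda>y (u, v). a u v * y + b u v) (al*x+be) (e#L)
      = foldl (\<lambda>y (u, v). a u v * y + b u v) (a u v * (al * x + be) + b u v) L" by (simp add: e)
  also have "\<dots> = foldl (\<lambda>y (u, v). a u v * y + b u v) ((a u v * al) * x + (a u v * be + b u v)) L"
    by (simp only: eq)
  also have "\<dots> = fst (foldl (pstep a b) (a u v * al, a u v * be + b u v) L) * x + snd (foldl (pstep a b) (a u v * al, a u v * be + b u v) L)"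
    by (rule Cons.IH)
  also have "\<dots> = fst (foldl (pstep a b) (al,be) (e#L)) * x + snd (foldl (pstep a b) (al,be) (e#L))"
    by (simp add: e pstep_def)
  finally show ?case .
qed

lemma path_cost_aff: "path_cost a b p x = fst (pcoef a b p) * x + snd (pcoef a b p)"
  unfolding path_cost_def pcoef_def using foldl_aff[of a b 1 x 0] by simp

lemma foldl_neg:
  fixes a b :: "nat \<Rightarrow> nat \<Rightarrow> real" and y :: real
  shows "foldl (\<lambda>y (u, v). a u v * y + (\<lambda>u v. - b u v) u v) (-y) L = - foldl (\<lambda>y (u, v). a u v * y + b u v) y L"
proof (induction L arbitrary: y)
  case Nil
  then show ?case by simp
next
  case (Cons e L)
  obtain u v where e: "e = (u,v)" by (cases e)
  have "a u v * (-y) + - b u v = - (a u v * y + b u v)" by (simp add: algebra_simps)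
  then show ?case using Cons.IH[of "a u v * y + b u v"] by (simp add: e)
qed

lemma path_cost_neg: "path_cost a (\<lambda>u v. - b u v) p (-x) = - path_cost a b p x"
  unfolding path_cost_def using foldl_neg by blast

lemma zip_tl_append:
  "p1 \<noteq> [] \<Longrightarrow> p2 \<noteq> [] \<Longrightarrow> zip (p1@p2) (tl (p1@p2)) = zip p1 (tl p1) @ (last p1, hd p2) # zip p2 (tl p2)"
proof (induction p1)
  case Nil
  then show ?case by simp
next
  case (Cons x xs)
  show ?case
  proof (cases xs)
    case Nil
    then show ?thesis using Cons.prems by (cases p2) auto
  next
    case (Cons y ys)
    then show ?thesis using Cons.IH Cons.prems by auto
  qed
qed

lemma path_cost_append:
  assumes "p1 \<noteq> []" "p2 \<noteq> []"
  shows "path_cost a b (p1@p2) x = path_cost a b p2 (a (last p1) (hd p2) * path_cost a b p1 x + b (last p1) (hd p2))"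
  unfolding path_cost_def zip_tl_append[OF assms] by simp

lemma st_paths_append:
  assumes p1: "p1 \<in> st_paths E s u" and p2: "p2 \<in> st_paths E v t" and e: "(u,v) \<in> E"
  shows "p1 @ p2 \<in> st_paths E s t"
proof -
  have n1: "p1 \<noteq> []" "hd p1 = s" "last p1 = u" "\<forall>i. Suc i < length p1 \<longrightarrow> (p1 ! i, p1 ! Suc i) \<in> E"
    using p1 unfolding st_paths_def by auto
  have n2: "p2 \<noteq> []" "hd p2 = v" "last p2 = t" "\<forall>i. Suc i < length p2 \<longrightarrow> (p2 ! i, p2 ! Suc i) \<in> E"
    using p2 unfolding st_paths_def by auto
  have "((p1@p2) ! i, (p1@p2) ! Suc i) \<in> E" if i: "Suc i < length (p1@p2)" for i
  proof -
    consider "Suc i < length p1" | "Suc i = length p1" | "Suc i > length p1" by linarith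
    then show ?thesis
    proof cases
      case 1
      then show ?thesis using n1 by (simp add: nth_append)
    next
      case 2
      then have "i = length p1 - 1" by simp
      then have "(p1@p2) ! i = last p1" using n1 by (simp add: nth_append last_conv_nth)
      moreover have "(p1@p2) ! Suc i = hd p2" using 2 n2 by (simp add: nth_append hd_conv_nth)
      ultimately show ?thesis using n1 n2 e by simp
    next
      case 3
      then have "(p1@p2) ! i = p2 ! (i - length p1)" "(p1@p2) ! Suc i = p2 ! Suc (i - length p1)"
        by (simp_all add: nth_append Suc_diff_le)
      moreover have "Suc (i - length p1) < length p2" using i 3 by auto
      ultimately show ?thesis using n2 by simp
    qed
  qed
  then show ?thesis using n1 n2 unfolding st_paths_def by auto
qed

lemma st_paths_split:
  assumes p: "p \<in> st_paths E s t" and sD: "s \<in> D" and tD: "t \<notin> D"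
  shows "\<exists>p1 p2 u v. p = p1 @ p2 \<and> p1 \<in> st_paths E s u \<and> p2 \<in> st_paths E v t \<and> (u,v) \<in> E \<and> u \<in> D \<and> v \<notin> D"
proof -
  have n: "p \<noteq> []" "hd p = s" "last p = t" and ed: "\<And>i. Suc i < length p \<Longrightarrow> (p ! i, p ! Suc i) \<in> E"
    using p unfolding st_paths_def by auto
  have ex: "\<exists>j. j < length p \<and> p ! j \<notin> D"
    using n tD by (intro exI[of _ "length p - 1"]) (auto simp: last_conv_nth)
  define j where "j = (LEAST j. j < length p \<and> p ! j \<notin> D)"
  have j: "j < length p" "p ! j \<notin> D" using LeastI_ex[OF ex] unfolding j_def by auto
  have before: "p ! i \<in> D" if "i < j" for i
    using not_less_Least[of i "\<lambda>j. j < length p \<and> p ! j \<notin> D"] that j unfolding j_def[symmetric] by auto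
  have j0: "j > 0"
  proof (rule ccontr)
    assume "\<not> j > 0"
    then have "j = 0" by simp
    then show False using j n sD by (simp add: hd_conv_nth)
  qed
  define p1 where "p1 = take j p"
  define p2 where "p2 = drop j p"
  have "p = p1 @ p2" unfolding p1_def p2_def by simp
  moreover have "p1 \<in> st_paths E s (p ! (j - 1))"
  proof -
    have "p1 \<noteq> []" using j0 n unfolding p1_def by simp
    moreover have "hd p1 = s" using j0 n unfolding p1_def by (simp add: hd_conv_nth)
    moreover have "last p1 = p ! (j - 1)"
    proof -
      have "length p1 = j" using j unfolding p1_def by simp
      then have "last p1 = p1 ! (j - 1)" using j0 \<open>p1 \<noteq> []\<close> by (simp add: last_conv_nth)
      also have "\<dots> = p ! (j - 1)" unfolding p1_def using j0 by simp
      finally show ?thesis .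
    qed
    moreover have "(p1 ! i, p1 ! Suc i) \<in> E" if "Suc i < length p1" for i
      using that ed[of i] j unfolding p1_def by simp
    ultimately show ?thesis unfolding st_paths_def by auto
  qed
  moreover have "p2 \<in> st_paths E (p ! j) t"
  proof -
    have "p2 \<noteq> []" using j unfolding p2_def by simp
    moreover have "hd p2 = p ! j" using j unfolding p2_def by (simp add: hd_drop_conv_nth)
    moreover have "last p2 = t" using j n unfolding p2_def by simp
    moreover have "(p2 ! i, p2 ! Suc i) \<in> E" if "Suc i < length p2" for i
      using that ed[of "j + i"] j unfolding p2_def by simp
    ultimately show ?thesis unfolding st_paths_def by auto
  qed
  moreover have "(p ! (j - 1), p ! j) \<in> E" using ed[of "j - 1"] j j0 by simp
  moreover have "p ! (j - 1) \<in> D" using before j0 by simp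
  ultimately show ?thesis using j by blast
qed

lemma st_paths_mono: "E' \<subseteq> E \<Longrightarrow> st_paths E' s t \<subseteq> st_paths E s t"
  unfolding st_paths_def by auto

lemma st_paths_down:
  assumes p: "p \<in> st_paths E s u" and uD: "u \<in> D" and dc: "\<forall>(x,y)\<in>E. y \<in> D \<longrightarrow> x \<in> D"
  shows "p \<in> st_paths (E \<inter> D \<times> D) s u"
proof -
  have n: "p \<noteq> []" "hd p = s" "last p = u" and ed: "\<And>i. Suc i < length p \<Longrightarrow> (p ! i, p ! Suc i) \<in> E"
    using p unfolding st_paths_def by auto
  have all: "p ! (length p - 1 - k) \<in> D" if "k < length p" for k
    using that
  proof (induction k)
    case 0
    then show ?case using n uD by (simp add: last_conv_nth)
  next
    case (Suc k)
    then have "(p ! (length p - 1 - Suc k), p ! Suc (length p - 1 - Suc k)) \<in> E" using ed by simp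
    moreover have "Suc (length p - 1 - Suc k) = length p - 1 - k" using Suc.prems by simp
    ultimately show ?case using Suc dc by fastforce
  qed
  have allD: "p ! i \<in> D" if "i < length p" for i
    using all[of "length p - 1 - i"] that by simp
  show ?thesis using n ed allD unfolding st_paths_def by auto
qed

lemma st_paths_up:
  assumes p: "p \<in> st_paths E v t" and vA: "v \<in> A" and uc: "\<forall>(x,y)\<in>E. x \<in> A \<longrightarrow> y \<in> A"
  shows "p \<in> st_paths (E \<inter> A \<times> A) v t \<and> t \<in> A"
proof -
  have n: "p \<noteq> []" "hd p = v" "last p = t" and ed: "\<And>i. Suc i < length p \<Longrightarrow> (p ! i, p ! Suc i) \<in> E"
    using p unfolding st_paths_def by auto
  have allA: "p ! i \<in> A" if "i < length p" for i
    using that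
  proof (induction i)
    case 0
    then show ?case using n vA by (simp add: hd_conv_nth)
  next
    case (Suc i)
    then show ?case using ed[of i] uc by fastforce
  qed
  have "t \<in> A" using allA[of "length p - 1"] n by (simp add: last_conv_nth)
  then show ?thesis using n ed allA unfolding st_paths_def by auto
qed

lemma st_paths_trancl:
  assumes p: "p \<in> st_paths E s t" and ij: "i < j" "j < length p"
  shows "(p ! i, p ! j) \<in> E\<^sup>+"
  using ij
proof (induction j)
  case 0
  then show ?case by simp
next
  case (Suc j)
  have ed: "(p ! j, p ! Suc j) \<in> E" using p Suc.prems unfolding st_paths_def by auto
  show ?case
  proof (cases "i = j")
    case True
    then show ?thesis using ed by auto
  next
    case False
    then have "(p ! i, p ! j) \<in> E\<^sup>+" using Suc by auto
    then show ?thesis using ed by (rule trancl_into_trancl)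
  qed
qed

lemma st_paths_distinct:
  assumes p: "p \<in> st_paths E s t" and ac: "acyclic E"
  shows "distinct p"
proof -
  have "p ! i \<noteq> p ! j" if "i < j" "j < length p" for i j
    using st_paths_trancl[OF p that] ac unfolding acyclic_def by metis
  then show ?thesis unfolding distinct_conv_nth by (metis linorder_neqE_nat)
qed

lemma st_paths_in_V:
  assumes p: "p \<in> st_paths E s t" and EV: "E \<subseteq> V \<times> V" and sV: "s \<in> V"
  shows "set p \<subseteq> V"
proof -
  have n: "p \<noteq> []" "hd p = s" and ed: "\<And>i. Suc i < length p \<Longrightarrow> (p ! i, p ! Suc i) \<in> E"
    using p unfolding st_paths_def by auto
  have "p ! i \<in> V" if "i < length p" for i
  proof (cases i)
    case 0
    then show ?thesis using n sV by (simp add: hd_conv_nth)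
  next
    case (Suc k)
    then show ?thesis using ed[of k] that EV by auto
  qed
  then show ?thesis by (auto simp: in_set_conv_nth)
qed

lemma st_paths_finite:
  assumes "finite V" "E \<subseteq> V \<times> V" "s \<in> V" "acyclic E"
  shows "finite (st_paths E s t)"
  by (rule finite_subset[OF _ finite_subset_distinct[OF assms(1)]])
     (use st_paths_in_V[OF _ assms(2,3)] st_paths_distinct[OF _ assms(4)] in blast)

lemma cost_G_envL:
  "cost_G a b E s t = envL (pcoef a b ` st_paths E s t)"
proof (rule ext)
  fix x
  have "(\<lambda>(c,d). c*x+d) ` (pcoef a b ` st_paths E s t) = (\<lambda>p. path_cost a b p x) ` st_paths E s t"
    unfolding image_image by (auto simp: path_cost_aff case_prod_beta)
  then show "cost_G a b E s t x = envL (pcoef a b ` st_paths E s t) x"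
    unfolding cost_G_def envL_def by simp
qed

lemma down_closed_exists:
  assumes fV: "finite V" and EV: "E \<subseteq> V \<times> V" and ac: "acyclic E"
  shows "m \<le> card V \<Longrightarrow> \<exists>D \<subseteq> V. card D = m \<and> (\<forall>(x,y)\<in>E. y \<in> D \<longrightarrow> x \<in> D)"
proof (induction m)
  case 0
  then show ?case by (intro exI[of _ "{}"]) auto
next
  case (Suc m)
  then obtain D where D: "D \<subseteq> V" "card D = m" "\<forall>(x,y)\<in>E. y \<in> D \<longrightarrow> x \<in> D" by auto
  have fE: "finite E" using finite_subset[OF EV] fV by auto
  have wf: "wf E" by (rule finite_acyclic_wf[OF fE ac])
  have "D \<noteq> V" using D Suc.prems by auto
  then obtain x0 where x0: "x0 \<in> V - D" using D by auto
  obtain z where z: "z \<in> V - D" "\<forall>y. (y, z) \<in> E \<longrightarrow> y \<notin> V - D"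
    using wf x0 unfolding wf_eq_minimal by blast
  have "\<forall>(x,y)\<in>E. y \<in> insert z D \<longrightarrow> x \<in> insert z D"
  proof (clarify)
    fix x y assume xy: "(x,y) \<in> E" "y \<in> insert z D" "x \<notin> D"
    show "x = z"
    proof (cases "y = z")
      case True
      then have "x \<notin> V - D" using z xy by auto
      moreover have "x \<in> V" using xy EV by auto
      ultimately show ?thesis using xy by auto
    next
      case False
      then show ?thesis using xy D by auto
    qed
  qed
  moreover have "card (insert z D) = Suc m"
  proof -
    have "finite D" using D(1) fV finite_subset by blast
    then show ?thesis using z D by simp
  qed
  moreover have "insert z D \<subseteq> V" using D z by auto
  ultimately show ?case by blast
qed



lemma count_step:
  assumes fJ: "finite J" and neJ: "J \<noteq> {}" and HB: "\<forall>j\<in>J. \<exists>B. PLB (H j) B \<and> card B \<le> K"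
    and Feq: "\<And>x. envL S x = Min ((\<lambda>j. H j x) ` J)" and fS: "finite S" "S \<noteq> {}"
  shows "\<exists>B. PLB (envL S) B \<and> card B \<le> card J * (K+1)"
proof -
  from bchoice[OF HB] obtain Bs where Bs: "\<forall>j\<in>J. PLB (H j) (Bs j) \<and> card (Bs j) \<le> K" by blast
  have Fe: "envL S = (\<lambda>x. Min ((\<lambda>j. H j x) ` J))" using Feq by (rule ext)
  have sub: "Aff (envL S) \<subseteq> (\<Union>j\<in>J. Aff (H j))"
  proof -
    have "\<forall>j\<in>J. PLB (H j) (Bs j)" using Bs by blast
    then show ?thesis unfolding Fe by (rule Aff_Min[OF fJ neJ])
  qed
  have fin: "\<forall>j\<in>J. finite (Aff (H j)) \<and> card (Aff (H j)) \<le> K + 1"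
    using Bs Aff_card by fastforce
  have fU: "finite (\<Union>j\<in>J. Aff (H j))" using fJ fin by auto
  have "card (Aff (envL S)) \<le> card (\<Union>j\<in>J. Aff (H j))" by (rule card_mono[OF fU sub])
  also have "\<dots> \<le> (\<Sum>j\<in>J. card (Aff (H j)))" by (rule card_UN_le[OF fJ])
  also have "\<dots> \<le> (\<Sum>j\<in>J. K + 1)" using fin by (intro sum_mono) auto
  also have "\<dots> = card J * (K+1)" by simp
  finally have cA: "card (Aff (envL S)) \<le> card J * (K+1)" .
  show ?thesis using envL_PLB[OF fS] cA by (intro exI[of _ "nbp (envL S)"]) auto
qed

lemma comp_piece:
  assumes "PLB X BX" "card BX \<le> K" "lev2 X" "PLB G BG" "card BG \<le> K"
  shows "\<exists>B. PLB (\<lambda>x. G (al * X x + be)) B \<and> card B \<le> 3*K"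
proof -
  have h1: "PLB (\<lambda>x. al * X x + be) BX" using PLB_affine[OF assms(1)] .
  have h2: "lev2 (\<lambda>x. al * X x + be)" using lev2_affine[OF assms(3)] .
  from PLB_comp[OF assms(4) h1 h2] assms(2,5) show ?thesis by (intro exI) auto
qed

lemma cost_G_props:
  assumes "finite (st_paths E s t)" "st_paths E s t \<noteq> {}"
  shows "(\<exists>p\<in>st_paths E s t. cost_G a b E s t x = path_cost a b p x) \<and> (\<forall>p\<in>st_paths E s t. cost_G a b E s t x \<le> path_cost a b p x)"
proof -
  have "cost_G a b E s t x \<in> (\<lambda>p. path_cost a b p x) ` st_paths E s t"
    unfolding cost_G_def using assms by (intro Min_in) auto
  moreover have "\<forall>p\<in>st_paths E s t. cost_G a b E s t x \<le> path_cost a b p x"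
    unfolding cost_G_def using assms by (auto intro: Min_le)
  ultimately show ?thesis by auto
qed

lemma cost_U_props:
  assumes "finite (st_paths E s t)" "st_paths E s t \<noteq> {}"
  shows "(\<exists>p\<in>st_paths E s t. - cost_G a (\<lambda>u v. - b u v) E s t (-x) = path_cost a b p x) \<and> (\<forall>p\<in>st_paths E s t. path_cost a b p x \<le> - cost_G a (\<lambda>u v. - b u v) E s t (-x))"
  using cost_G_props[OF assms, of a "\<lambda>u v. - b u v" "-x"] path_cost_neg[of a b _ x] by force

lemma decomp:
  fixes a b :: "nat \<Rightarrow> nat \<Rightarrow> real" and E :: "(nat \<times> nat) set" and x :: real
  assumes fV: "finite V" and EV: "E \<subseteq> V \<times> V" and ac: "acyclic E" and sV: "s \<in> V"
    and sD: "s \<in> D" and tD: "t \<notin> D" and ne: "st_paths E s t \<noteq> {}"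
  defines "C \<equiv> {(u,v). (u,v) \<in> E \<and> u \<in> D \<and> v \<notin> D \<and> st_paths E s u \<noteq> {} \<and> st_paths E v t \<noteq> {}}"
  defines "H \<equiv> (\<lambda>((u,v),\<sigma>) x. cost_G a b E v t (a u v * (if \<sigma> then cost_G a b E s u x else - cost_G a (\<lambda>u v. - b u v) E s u (-x)) + b u v))"
  shows "cost_G a b E s t x = Min ((\<lambda>j. H j x) ` (C \<times> UNIV))"
proof -
  have finP: "finite (st_paths E s u)" for u using st_paths_finite[OF fV EV sV ac] .
  have finQ: "finite (st_paths E v t)" if "v \<in> V" for v using st_paths_finite[OF fV EV that ac] .
  have fC: "finite C" unfolding C_def using finite_subset[OF EV] fV by (auto intro: finite_subset)
  have upper: "cost_G a b E s t x \<le> H j x" if j: "j \<in> C \<times> UNIV" for j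
  proof -
    obtain u v \<sigma> where jj: "j = ((u,v),\<sigma>)" by (metis prod.collapse)
    have uv: "(u,v) \<in> E" "st_paths E s u \<noteq> {}" "st_paths E v t \<noteq> {}" using j jj unfolding C_def by auto
    have vV: "v \<in> V" using uv EV by auto
    define y where "y = (if \<sigma> then cost_G a b E s u x else - cost_G a (\<lambda>u v. - b u v) E s u (-x))"
    obtain p1 where p1: "p1 \<in> st_paths E s u" "y = path_cost a b p1 x"
    proof (cases \<sigma>)
      case True
      then show ?thesis using that cost_G_props[OF finP uv(2), of a b x] unfolding y_def by auto
    next
      case False
      then show ?thesis using that cost_U_props[OF finP uv(2), of a b x] unfolding y_def by auto
    qed
    obtain p2 where p2: "p2 \<in> st_paths E v t" "cost_G a b E v t (a u v * y + b u v) = path_cost a b p2 (a u v * y + b u v)"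
      using cost_G_props[OF finQ[OF vV] uv(3)] by blast
    have l1: "last p1 = u" "p1 \<noteq> []" using p1 unfolding st_paths_def by auto
    have h2: "hd p2 = v" "p2 \<noteq> []" using p2 unfolding st_paths_def by auto
    have pp: "p1 @ p2 \<in> st_paths E s t" by (rule st_paths_append[OF p1(1) p2(1) uv(1)])
    have "H j x = cost_G a b E v t (a u v * y + b u v)" unfolding H_def jj y_def by simp
    also have "\<dots> = path_cost a b p2 (a u v * y + b u v)" using p2 by simp
    finally have "H j x = path_cost a b p2 (a u v * y + b u v)" .
    also have "\<dots> = path_cost a b (p1 @ p2) x" using path_cost_append[OF l1(2) h2(2)] l1 h2 p1 by simp
    finally have "H j x = path_cost a b (p1 @ p2) x" .
    then show ?thesis using cost_G_props[OF finP ne, of a b x] pp by auto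
  qed
  obtain p where p: "p \<in> st_paths E s t" "cost_G a b E s t x = path_cost a b p x"
    using cost_G_props[OF finP ne] by blast
  obtain p1 p2 u v where sp: "p = p1 @ p2" "p1 \<in> st_paths E s u" "p2 \<in> st_paths E v t" "(u,v) \<in> E" "u \<in> D" "v \<notin> D"
    using st_paths_split[OF p(1) sD tD] by blast
  have vV: "v \<in> V" using sp EV by auto
  have uvC: "(u,v) \<in> C" using sp unfolding C_def by auto
  have l1: "last p1 = u" "p1 \<noteq> []" using sp unfolding st_paths_def by auto
  have h2: "hd p2 = v" "p2 \<noteq> []" using sp unfolding st_paths_def by auto
  have ne1: "st_paths E s u \<noteq> {}" "st_paths E v t \<noteq> {}" using sp by auto
  define c1 where "c1 = path_cost a b p1 x"
  have Fx: "cost_G a b E s t x = path_cost a b p2 (a u v * c1 + b u v)"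
    using p(2) path_cost_append[OF l1(2) h2(2)] l1 h2 sp(1) unfolding c1_def by simp
  define al where "al = fst (pcoef a b p2)"
  define be where "be = snd (pcoef a b p2)"
  have pc2: "path_cost a b p2 y = al * y + be" for y unfolding al_def be_def by (rule path_cost_aff)
  define \<sigma> where "\<sigma> = (al * a u v \<ge> 0)"
  define X where "X = (if \<sigma> then cost_G a b E s u x else - cost_G a (\<lambda>u v. - b u v) E s u (-x))"
  have HX: "H ((u,v),\<sigma>) x = cost_G a b E v t (a u v * X + b u v)" unfolding H_def X_def by simp
  have "(al * a u v) * X \<le> (al * a u v) * c1"
  proof (cases \<sigma>)
    case True
    have "X \<le> c1" using True cost_G_props[OF finP ne1(1), of a b x] sp(2) unfolding X_def c1_def by auto
    then show ?thesis using True unfolding \<sigma>_def by (intro mult_left_mono) auto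
  next
    case False
    have "c1 \<le> X" using False cost_U_props[OF finP ne1(1), of a b x] sp(2) unfolding X_def c1_def by auto
    then show ?thesis using False unfolding \<sigma>_def by (intro mult_left_mono_neg) auto
  qed
  then have "al * (a u v * X + b u v) + be \<le> al * (a u v * c1 + b u v) + be" by (simp add: algebra_simps)
  then have "path_cost a b p2 (a u v * X + b u v) \<le> cost_G a b E s t x" unfolding Fx pc2 .
  moreover have "cost_G a b E v t (a u v * X + b u v) \<le> path_cost a b p2 (a u v * X + b u v)"
    using cost_G_props[OF finQ[OF vV] ne1(2)] sp(3) by blast
  ultimately have lower: "H ((u,v),\<sigma>) x \<le> cost_G a b E s t x" unfolding HX by linarith
  have jin: "((u,v),\<sigma>) \<in> C \<times> UNIV" using uvC by auto
  have eqH: "H ((u,v),\<sigma>) x = cost_G a b E s t x" using lower upper[OF jin] by linarith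
  show ?thesis
  proof (rule Min_eqI[symmetric])
    show "finite ((\<lambda>j. H j x) ` (C \<times> UNIV))" using fC by simp
    show "\<And>y. y \<in> (\<lambda>j. H j x) ` (C \<times> UNIV) \<Longrightarrow> cost_G a b E s t x \<le> y" using upper by blast
    show "cost_G a b E s t x \<in> (\<lambda>j. H j x) ` (C \<times> UNIV)" by (rule image_eqI[where x="((u,v),\<sigma>)"]) (use eqH jin in simp_all)
  qed
qed



fun R :: "nat \<Rightarrow> nat" where
  "R 0 = 0"
| "R (Suc k) = 2 * 4^k * (3 * R k + 1)"

lemma R_mono: "R k \<le> R (Suc k)"
proof -
  have "1 \<le> 2 * (4::nat)^k" using one_le_power[of "4::nat" k] by linarith
  then have "1 * (3 * R k + 1) \<le> 2 * 4^k * (3 * R k + 1)" by (intro mult_right_mono) auto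
  then show ?thesis by simp
qed

lemma R_bound: "R k + 1 \<le> 2^(k^2 + 2*k)"
proof (induction k)
  case 0
  then show ?case by simp
next
  case (Suc k)
  define X :: nat where "X = 2^(k^2 + 2*k)"
  define Y :: nat where "Y = 4^k"
  have X1: "X \<ge> 1" "Y \<ge> 1" unfolding X_def Y_def by simp_all
  have IH: "R k + 1 \<le> X" using Suc.IH unfolding X_def .
  have "2^(Suc k ^ 2 + 2 * Suc k) = (2::nat)^3 * 2^(2*k) * 2^(k^2 + 2*k)"
  proof -
    have "Suc k ^ 2 + 2 * Suc k = 3 + 2*k + (k^2 + 2*k)" by (simp add: power2_eq_square)
    then show ?thesis by (simp only: power_add)
  qed
  also have "\<dots> = 8 * Y * X" unfolding X_def Y_def by (simp add: power_mult)
  finally have eq: "2^(Suc k ^ 2 + 2 * Suc k) = 8 * Y * X" .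
  have "3 * R k + 1 \<le> 3 * X" using IH by linarith
  then have "2 * Y * (3 * R k + 1) \<le> 2 * Y * (3 * X)" by (intro mult_left_mono) auto
  moreover have "1 \<le> Y * X" using X1 by (simp add: one_le_mult_iff)
  ultimately have "2 * Y * (3 * R k + 1) + 1 \<le> 8 * Y * X" by linarith
  then show ?case unfolding eq by (simp add: Y_def)
qed

lemma PLB_id: "PLB (\<lambda>x. x) {}"
proof -
  have "\<forall>z\<in>{x..y}. z = 1*z + (0::real)" for x y :: real by simp
  then show ?thesis unfolding PLB_def by blast
qed

lemma main:
  "\<forall>V E s t (a::nat\<Rightarrow>nat\<Rightarrow>real) b. finite V \<and> card V \<le> 2^k \<and> s \<in> V \<and> t \<in> V \<and> E \<subseteq> V \<times> V \<and> acyclic E \<and> st_paths E s t \<noteq> {}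
     \<longrightarrow> (\<exists>B. PLB (cost_G a b E s t) B \<and> card B \<le> R k)"
proof (induction k)
  case 0
  show ?case
  proof (intro allI impI)
    fix V E s t and a b :: "nat \<Rightarrow> nat \<Rightarrow> real"
    assume H: "finite V \<and> card V \<le> 2^0 \<and> s \<in> V \<and> t \<in> V \<and> E \<subseteq> V \<times> V \<and> acyclic E \<and> st_paths E s t \<noteq> {}"
    have one: "\<forall>x\<in>V. \<forall>y\<in>V. x = y" using H card_le_Suc0_iff_eq[of V] by auto
    have E0: "E = {}"
    proof (rule ccontr)
      assume "E \<noteq> {}"
      then obtain x y where xy: "(x,y) \<in> E" by auto
      then have "x = y" using H one by auto
      then have "(x,x) \<in> E\<^sup>+" using xy by auto
      then show False using H unfolding acyclic_def by auto
    qed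
    have pc: "path_cost a b p x = x" if p: "p \<in> st_paths E s t" for p x
    proof -
      have "p \<noteq> []" "\<not> Suc 0 < length p" using p E0 unfolding st_paths_def by auto
      then have "tl p = []" by (cases p) auto
      then show ?thesis unfolding path_cost_def by simp
    qed
    have "cost_G a b E s t = (\<lambda>x. x)"
    proof (rule ext)
      fix x
      have "(\<lambda>p. path_cost a b p x) ` st_paths E s t = {x}" using pc H by auto
      then show "cost_G a b E s t x = x" unfolding cost_G_def by simp
    qed
    then show "\<exists>B. PLB (cost_G a b E s t) B \<and> card B \<le> R 0" using PLB_id by (intro exI[of _ "{}"]) simp
  qed
next
  case (Suc k)
  show ?case
  proof (intro allI impI)
    fix V E s t and a b :: "nat \<Rightarrow> nat \<Rightarrow> real"
    assume H: "finite V \<and> card V \<le> 2^Suc k \<and> s \<in> V \<and> t \<in> V \<and> E \<subseteq> V \<times> V \<and> acyclic E \<and> st_paths E s t \<noteq> {}"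
    then have fV: "finite V" and cV: "card V \<le> 2^Suc k" and sV: "s \<in> V" and tV: "t \<in> V"
      and EV: "E \<subseteq> V \<times> V" and ac: "acyclic E" and ne: "st_paths E s t \<noteq> {}" by auto
    have IHapp: "\<exists>B. PLB (cost_G a' b' (E \<inter> W \<times> W) s' t') B \<and> card B \<le> R k"
      if "W \<subseteq> V" "card W \<le> 2^k" "s' \<in> W" "t' \<in> W" "st_paths (E \<inter> W \<times> W) s' t' \<noteq> {}" for W s' t' a' b'
    proof -
      have "finite W" using that fV finite_subset by blast
      moreover have "acyclic (E \<inter> W \<times> W)" using ac acyclic_subset by blast
      ultimately show ?thesis using Suc.IH that by blast
    qed
    show "\<exists>B. PLB (cost_G a b E s t) B \<and> card B \<le> R (Suc k)"
    proof (cases "card V \<le> 2^k")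
      case True
      have "E \<inter> V \<times> V = E" using EV by auto
      then obtain B where "PLB (cost_G a b E s t) B" "card B \<le> R k"
        using IHapp[of V s t a b] True sV tV ne by auto
      then show ?thesis using R_mono[of k] by (intro exI[of _ B]) auto
    next
      case False
      then obtain V1 where V1: "V1 \<subseteq> V" "card V1 = 2^k" and dc: "\<forall>(x,y)\<in>E. y \<in> V1 \<longrightarrow> x \<in> V1"
        using down_closed_exists[OF fV EV ac, of "2^k"] by auto
      define V2 where "V2 = V - V1"
      have fV1: "finite V1" using V1 fV finite_subset by blast
      have cV2: "card V2 \<le> 2^k" unfolding V2_def using card_Diff_subset[OF fV1 V1(1)] V1 cV by simp
      have V2s: "V2 \<subseteq> V" unfolding V2_def by auto
      have uc: "\<forall>(x,y)\<in>E. x \<in> V2 \<longrightarrow> y \<in> V2" unfolding V2_def using dc EV by auto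
      have eq_down: "st_paths (E \<inter> V1 \<times> V1) s' u = st_paths E s' u" if "u \<in> V1" for s' u
        using st_paths_down[OF _ that dc] st_paths_mono[of "E \<inter> V1 \<times> V1" E] by blast
      have eq_up: "st_paths (E \<inter> V2 \<times> V2) v t' = st_paths E v t'" if "v \<in> V2" for v t'
        using st_paths_up[OF _ that uc] st_paths_mono[of "E \<inter> V2 \<times> V2" E] by blast
      have cg_eq: "cost_G a' b' E' s' t' = cost_G a' b' E s' t'" if "st_paths E' s' t' = st_paths E s' t'" for a' b' E' s' t'
        unfolding cost_G_def[abs_def] using that by simp
      consider (both1) "s \<in> V1" "t \<in> V1" | (s2) "s \<notin> V1" | (cross) "s \<in> V1" "t \<notin> V1" by blast
      then show ?thesis
      proof cases
        case both1
        have cV1: "card V1 \<le> 2^k" using V1(2) by simp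
        have ne1: "st_paths (E \<inter> V1 \<times> V1) s t \<noteq> {}" using eq_down[OF both1(2)] ne by simp
        obtain B where B: "PLB (cost_G a b (E \<inter> V1 \<times> V1) s t) B" "card B \<le> R k"
          using IHapp[OF V1(1) cV1 both1 ne1] by blast
        then show ?thesis using cg_eq[OF eq_down[OF both1(2)]] R_mono[of k] by (intro exI[of _ B]) auto
      next
        case s2
        then have sV2: "s \<in> V2" using sV unfolding V2_def by auto
        obtain p where "p \<in> st_paths E s t" using ne by auto
        then have tV2: "t \<in> V2" using st_paths_up[OF _ sV2 uc] by blast
        have ne2: "st_paths (E \<inter> V2 \<times> V2) s t \<noteq> {}" using eq_up[OF sV2] ne by simp
        obtain B where B: "PLB (cost_G a b (E \<inter> V2 \<times> V2) s t) B" "card B \<le> R k"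
          using IHapp[OF V2s cV2 sV2 tV2 ne2] by blast
        then show ?thesis using cg_eq[OF eq_up[OF sV2]] R_mono[of k] by (intro exI[of _ B]) auto
      next
        case cross
        define C where "C = {(u,v). (u,v) \<in> E \<and> u \<in> V1 \<and> v \<notin> V1 \<and> st_paths E s u \<noteq> {} \<and> st_paths E v t \<noteq> {}}"
        define Hf where "Hf = (\<lambda>((u,v),\<sigma>) x. cost_G a b E v t (a u v * (if \<sigma> then cost_G a b E s u x else - cost_G a (\<lambda>u v. - b u v) E s u (-x)) + b u v))"
        have dec: "cost_G a b E s t x = Min ((\<lambda>j. Hf j x) ` (C \<times> UNIV))" for x
          unfolding C_def Hf_def by (rule decomp[OF fV EV ac sV cross ne])
        define S where "S = pcoef a b ` st_paths E s t"
        have fS: "finite S" "S \<noteq> {}" unfolding S_def using st_paths_finite[OF fV EV sV ac] ne by auto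
        have FS: "cost_G a b E s t = envL S" unfolding S_def by (rule cost_G_envL)
        have CV: "C \<subseteq> V1 \<times> V2" unfolding C_def V2_def using EV by auto
        have fC: "finite C" using finite_subset[OF CV] fV1 V2s fV finite_subset by blast
        have cC: "card C \<le> 4^k"
        proof -
          have "card C \<le> card (V1 \<times> V2)" using card_mono[OF _ CV] fV1 V2s fV finite_subset by blast
          also have "\<dots> = card V1 * card V2" by (rule card_cartesian_product)
          also have "\<dots> \<le> 2^k * 2^k" using V1 cV2 by simp
          also have "\<dots> = 4^k" by (simp add: power_mult_distrib[symmetric])
          finally show ?thesis .
        qed
        have neC: "C \<noteq> {}"
        proof -
          obtain p where p: "p \<in> st_paths E s t" using ne by auto
          obtain p1 p2 u v where sp: "p = p1 @ p2" "p1 \<in> st_paths E s u" "p2 \<in> st_paths E v t" "(u,v) \<in> E" "u \<in> V1" "v \<notin> V1"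
            using st_paths_split[OF p cross] by blast
          then have "(u,v) \<in> C" unfolding C_def by auto
          then show ?thesis by auto
        qed
        have HB: "\<forall>j\<in>C \<times> UNIV. \<exists>B. PLB (Hf j) B \<and> card B \<le> 3 * R k"
        proof
          fix j assume j: "j \<in> C \<times> (UNIV :: bool set)"
          obtain u v \<sigma> where jj: "j = ((u,v),\<sigma>)" by (metis prod.collapse)
          have uv: "(u,v) \<in> E" "u \<in> V1" "v \<notin> V1" "st_paths E s u \<noteq> {}" "st_paths E v t \<noteq> {}"
            using j jj unfolding C_def by auto
          have vV2: "v \<in> V2" using uv EV unfolding V2_def by auto
          have sV1: "s \<in> V1" using cross by simp
          have tV2: "t \<in> V2" using cross tV unfolding V2_def by simp
          have finU: "finite (st_paths E s u)" using st_paths_finite[OF fV EV sV ac] .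
          have cV1: "card V1 \<le> 2^k" using V1(2) by simp
          have neu: "st_paths (E \<inter> V1 \<times> V1) s u \<noteq> {}" using eq_down[OF uv(2)] uv(4) by simp
          have nev: "st_paths (E \<inter> V2 \<times> V2) v t \<noteq> {}" using eq_up[OF vV2] uv(5) by simp
          obtain BL where BL: "PLB (cost_G a b E s u) BL" "card BL \<le> R k"
            using IHapp[OF V1(1) cV1 sV1 uv(2) neu, of a b] cg_eq[OF eq_down[OF uv(2)]] by auto
          obtain BU where BU: "PLB (cost_G a (\<lambda>u v. - b u v) E s u) BU" "card BU \<le> R k"
            using IHapp[OF V1(1) cV1 sV1 uv(2) neu, of a "\<lambda>u v. - b u v"] cg_eq[OF eq_down[OF uv(2)]] by auto
          obtain BG where BG: "PLB (cost_G a b E v t) BG" "card BG \<le> R k"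
            using IHapp[OF V2s cV2 vV2 tV2 nev, of a b] cg_eq[OF eq_up[OF vV2]] by auto
          define SL where "SL = pcoef a b ` st_paths E s u"
          define SU where "SU = pcoef a (\<lambda>u v. - b u v) ` st_paths E s u"
          have fSL: "finite SL" "SL \<noteq> {}" unfolding SL_def using finU uv(4) by auto
          have fSU: "finite SU" "SU \<noteq> {}" unfolding SU_def using finU uv(4) by auto
          have lL: "lev2 (cost_G a b E s u)"
            unfolding cost_G_envL SL_def[symmetric] by (rule conc_lev2[OF envL_conc[OF fSL]])
          have "lev2 (\<lambda>x. -1 * cost_G a (\<lambda>u v. - b u v) E s u (-x) + 0)"
            unfolding cost_G_envL SU_def[symmetric]
            by (rule lev2_affine[OF conc_lev2[OF conc_reflect[OF envL_conc[OF fSU]]]])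
          then have lU: "lev2 (\<lambda>x. - cost_G a (\<lambda>u v. - b u v) E s u (-x))" by simp
          have pU: "PLB (\<lambda>x. - cost_G a (\<lambda>u v. - b u v) E s u (-x)) (uminus ` BU)"
            by (rule PLB_reflect[OF BU(1)])
          have cU: "card (uminus ` BU) \<le> R k" using card_image_le[of BU uminus] BU PLB_def by fastforce
          define X where "X = (\<lambda>x. if \<sigma> then cost_G a b E s u x else - cost_G a (\<lambda>u v. - b u v) E s u (-x))"
          have "\<exists>BX. PLB X BX \<and> card BX \<le> R k \<and> lev2 X"
          proof (cases \<sigma>)
            case True
            then have "X = cost_G a b E s u" unfolding X_def by auto
            then show ?thesis using BL lL by auto
          next
            case False
            then have "X = (\<lambda>x. - cost_G a (\<lambda>u v. - b u v) E s u (-x))" unfolding X_def by auto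
            then show ?thesis using pU cU lU by auto
          qed
          then obtain BX where BX: "PLB X BX" "card BX \<le> R k" "lev2 X" by blast
          have "Hf j = (\<lambda>x. cost_G a b E v t (a u v * X x + b u v))"
            unfolding Hf_def jj X_def by (rule ext) simp
          then show "\<exists>B. PLB (Hf j) B \<and> card B \<le> 3 * R k"
            using comp_piece[OF BX(1,2,3) BG(1,2)] by simp
        qed
        have fJ: "finite (C \<times> (UNIV :: bool set))" using fC by simp
        have neJ: "C \<times> (UNIV :: bool set) \<noteq> {}" using neC by simp
        have Feq: "envL S x = Min ((\<lambda>j. Hf j x) ` (C \<times> UNIV))" for x using dec[of x] FS by simp
        obtain B where B: "PLB (envL S) B" "card B \<le> card (C \<times> (UNIV :: bool set)) * (3 * R k + 1)"
          using count_step[OF fJ neJ HB Feq fS] by blast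
        have "card (C \<times> (UNIV :: bool set)) = 2 * card C" by (simp add: card_cartesian_product)
        moreover have "2 * card C * (3 * R k + 1) \<le> 2 * 4^k * (3 * R k + 1)"
          using cC by (intro mult_right_mono) auto
        ultimately have "card (C \<times> (UNIV :: bool set)) * (3 * R k + 1) \<le> 2 * 4^k * (3 * R k + 1)"
          by simp
        then have "card B \<le> R (Suc k)" using B(2) by simp
        then show ?thesis using B(1) FS by auto
      qed
    qed
  qed
qed



lemma final_bound:
  fixes n k :: nat
  assumes n1: "n \<ge> 1" and nk: "n \<le> 2^k" and kk: "k = 0 \<or> 2^(k-1) < n"
  shows "real (2^(k^2+2*k)) \<le> real n powr (log 2 (real n) + 8)"
proof (cases "k = 0")
  case True
  have "log 2 (real n) \<ge> 0" using n1 by simp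
  then have "1 \<le> real n powr (log 2 (real n) + 8)" using n1 by (intro ge_one_powr_ge_zero) auto
  then show ?thesis using True by simp
next
  case False
  then have lt: "2^(k-1) < n" using kk by auto
  define L where "L = log 2 (real n)"
  have npos: "real n > 0" using n1 by simp
  have "real (k-1) = log 2 (real (2^(k-1)))" by (simp add: log_nat_power)
  also have "\<dots> < L" unfolding L_def using lt by (subst log_less_cancel_iff) auto
  finally have kL: "real k - 1 < L" using False by (simp add: of_nat_diff)
  have "(1::nat) \<le> 2^(k-1)" by simp
  then have "n \<ge> 2" using lt by linarith
  then have n2: "real n \<ge> 2" by simp
  have L1: "L \<ge> 1" unfolding L_def using n2 by simp
  have k0: "real k \<ge> 0" by simp
  have "real k * real k \<le> (L+1) * (L+1)" using kL k0 by (intro mult_mono) auto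
  then have ex: "real k ^ 2 + 2 * real k \<le> L * (L + 8)" using kL L1 by (simp add: power2_eq_square algebra_simps)
  have "real (2^(k^2+2*k)) = 2 powr (real k ^ 2 + 2 * real k)"
    by (simp add: powr_realpow[symmetric])
  also have "\<dots> \<le> 2 powr (L * (L + 8))" using ex by (intro powr_mono) auto
  also have "\<dots> = (2 powr L) powr (L + 8)" by (simp add: powr_powr)
  also have "2 powr L = real n" unfolding L_def using npos by simp
  finally show ?thesis unfolding L_def .
qed

theorem theorem2:
  shows "\<exists>C::real. \<forall>(V::nat set) E s t a b.
    finite V \<and> s \<in> V \<and> t \<in> V \<and> E \<subseteq> V \<times> V \<and> acyclic E \<and> st_paths E s t \<noteq> {} \<longrightarrow>
      piecewise_linear (cost_G a b E s t) \<and>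
      real (num_pieces (cost_G a b E s t)) \<le> real (card V) powr (log 2 (real (card V)) + C)"
proof (rule exI[of _ 8], intro allI impI)
  fix V :: "nat set" and E s t and a b :: "nat \<Rightarrow> nat \<Rightarrow> real"
  assume H: "finite V \<and> s \<in> V \<and> t \<in> V \<and> E \<subseteq> V \<times> V \<and> acyclic E \<and> st_paths E s t \<noteq> {}"
  then have fV: "finite V" and sV: "s \<in> V" and tV: "t \<in> V" and EV: "E \<subseteq> V \<times> V" and ac: "acyclic E"
    and ne: "st_paths E s t \<noteq> {}" by auto
  define n where "n = card V"
  have "card V > 0" using fV sV card_gt_0_iff by blast
  then have n1: "n \<ge> 1" unfolding n_def by simp
  have exk: "\<exists>k. n \<le> 2^k" using less_exp[of n] by (intro exI[of _ n]) simp
  define k where "k = (LEAST k. n \<le> 2^k)"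
  have nk: "n \<le> 2^k" unfolding k_def using LeastI_ex[OF exk] .
  have kk: "k = 0 \<or> 2^(k-1) < n"
  proof (cases "k = 0")
    case False
    then have "k - 1 < k" by simp
    then have "\<not> n \<le> 2^(k-1)" using not_less_Least[of "k-1" "\<lambda>k. n \<le> 2^k"] unfolding k_def[symmetric] by blast
    then show ?thesis by simp
  qed simp
  obtain B where B: "PLB (cost_G a b E s t) B" "card B \<le> R k"
    using main[of k] fV nk sV tV EV ac ne unfolding n_def by blast
  define S where "S = pcoef a b ` st_paths E s t"
  have fS: "finite S" "S \<noteq> {}" unfolding S_def using st_paths_finite[OF fV EV sV ac] ne by auto
  have FS: "cost_G a b E s t = envL S" unfolding S_def by (rule cost_G_envL)
  have part: "pl_partition (cost_G a b E s t) (card (Aff (cost_G a b E s t)))"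
    unfolding FS by (rule envL_partition[OF fS])
  then have pw: "piecewise_linear (cost_G a b E s t)" unfolding piecewise_linear_def by blast
  have "num_pieces (cost_G a b E s t) \<le> card (Aff (cost_G a b E s t))"
    unfolding num_pieces_def by (rule Least_le[where P="\<lambda>k. pl_partition (cost_G a b E s t) k", OF part])
  also have "\<dots> \<le> card B + 1" using Aff_card[OF B(1)] by simp
  also have "\<dots> \<le> R k + 1" using B(2) by simp
  also have "\<dots> \<le> 2^(k^2 + 2*k)" by (rule R_bound)
  finally have "real (num_pieces (cost_G a b E s t)) \<le> real (2^(k^2 + 2*k))" by linarith
  also have "\<dots> \<le> real n powr (log 2 (real n) + 8)" by (rule final_bound[OF n1 nk kk])
  finally show "piecewise_linear (cost_G a b E s t) \<and>
      real (num_pieces (cost_G a b E s t)) \<le> real (card V) powr (log 2 (real (card V)) + 8)"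
    using pw unfolding n_def by simp
qed


end
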